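(* For $n\ge 0$ let $a(n)$ be the number of compositions of $n$ that avoid each of the three compositions $252$, $343$, $424$ (i.e. $2\,5\,2$, $3\,4\,3$, $4\,2\,4$). Then $$\sum_{n=0}^{\infty} a(n)\,x^n = -\frac{x^{17}+3x^{14}+x^{13}-3x^{11}+x^{10}+x^{6}-x^{5}+x^{4}+x^{2}-2x+1}{x^{18}+3x^{15}+2x^{14}-2x^{13}-2x^{12}+3x^{11}-3x^{10}+x^{8}+x^{7}-x^{6}+2x^{5}-x^{4}-2x^{2}+3x-1}.$$ The first 31 terms $a(0),\dots,a(30)$ are $1, 1, 2, 4, 8, 16, 32, 64, 128, 255, 505, 998, 1971, 3893, 7697, 15223, 30113, 59575, 117861, 233164, 461250, 912423, 1804882, 3570257, 7062369, 13970211, 27634848, 54665348, 108135332, 213906125, 423134791$. Moreover $\lim_{n\to\infty} a(n+1)/a(n) = r$ with $r=1.9781317474\ldots$, and $a(n)\sim c\,r^n$ with $c=0.54805291269\ldots$.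
   Context: A composition of a non-negative integer $n$ is a finite ordered list $a_1 a_2\cdots a_k$ of positive integers with $a_1+\cdots+a_k=n$ (the empty composition is the unique composition of $0$). A composition $a_1\cdots a_k$ includes (contains) the composition $b_1\cdots b_s$ if $k\ge s$ and there exists $i$ with $1\le i\le k-s+1$ such that $b_j\le a_{i+j-1}$ for all $j=1,\dots,s$. It avoids $b_1\cdots b_s$ if it does not include it. The decimal constants are given by their printed initial digits. *)

theory Defs
  imports Complex_Main "HOL-Computational_Algebra.Formal_Power_Series" "HOL-Library.Landau_Symbols"
begin

definition is_composition :: "nat \<Rightarrow> nat list \<Rightarrow> bool" where
  "is_composition n as \<longleftrightarrow> (\<forall>a\<in>set as. 0 < a) \<and> sum_list as = n"

definition comp_includes :: "nat list \<Rightarrow> nat list \<Rightarrow> bool" where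
  "comp_includes as bs \<longleftrightarrow> length bs \<le> length as \<and>
     (\<exists>i. i + length bs \<le> length as \<and> (\<forall>j<length bs. bs ! j \<le> as ! (i + j)))"

definition comp_avoids :: "nat list \<Rightarrow> nat list \<Rightarrow> bool" where
  "comp_avoids as bs \<longleftrightarrow> \<not> comp_includes as bs"

definition a_count :: "nat \<Rightarrow> nat" where
  "a_count n = card {as. is_composition n as \<and> comp_avoids as [2,5,2]
                        \<and> comp_avoids as [3,4,3] \<and> comp_avoids as [4,2,4]}"

definition gf_num :: "real fps" where
  "gf_num = fps_X^17 + 3 * fps_X^14 + fps_X^13 - 3 * fps_X^11 + fps_X^10 + fps_X^6
            - fps_X^5 + fps_X^4 + fps_X^2 - 2 * fps_X + 1"

definition gf_den :: "real fps" where
  "gf_den = fps_X^18 + 3 * fps_X^15 + 2 * fps_X^14 - 2 * fps_X^13 - 2 * fps_X^12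
            + 3 * fps_X^11 - 3 * fps_X^10 + fps_X^8 + fps_X^7 - fps_X^6 + 2 * fps_X^5
            - fps_X^4 - 2 * fps_X^2 + 3 * fps_X - 1"

end

theory Submission
  imports Defs "HOL-Computational_Algebra.Polynomial_FPS"
begin

definition pv :: "real list \<Rightarrow> real \<Rightarrow> real" where
  "pv cs x = foldr (\<lambda>c acc. c + x * acc) cs 0"

lemma pv_Nil[simp]: "pv [] x = 0" by (simp add: pv_def)
lemma pv_Cons: "pv (c#cs) x = c + x * pv cs x" by (simp add: pv_def)
lemma pv_single[simp]: "pv [c] x = c" by (simp add: pv_def)

fun padd :: "real list \<Rightarrow> real list \<Rightarrow> real list" where
  "padd [] ys = ys"
| "padd xs [] = xs"
| "padd (x#xs) (y#ys) = (x+y) # padd xs ys"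

lemma pv_padd: "pv (padd xs ys) x = pv xs x + pv ys x"
  by (induction xs ys rule: padd.induct) (simp_all add: pv_Cons algebra_simps)

lemma pv_map_mult: "pv (map (\<lambda>c. k * c) cs) x = k * pv cs x"
  by (induction cs) (simp_all add: pv_Cons algebra_simps)

fun Lop :: "real list \<Rightarrow> (nat \<Rightarrow> real) \<Rightarrow> nat \<Rightarrow> real" where
  "Lop [] a n = 0"
| "Lop (c#cs) a n = c * a n + Lop cs a (Suc n)"

fun sd :: "real list \<Rightarrow> real \<Rightarrow> real list" where
  "sd [] r = []"
| "sd [c] r = []"
| "sd (c#d#cs) r = pv (d#cs) r # sd (d#cs) r"

lemma Lop_sd: "Lop p a n = Lop (sd p r) (\<lambda>m. a (Suc m) - r * a m) n + pv p r * a n"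
  by (induction p r arbitrary: n rule: sd.induct) (simp_all add: pv_Cons algebra_simps)

lemma Lop_shift: "Lop q a (Suc n) - r * Lop q a n = Lop q (\<lambda>m. a (Suc m) - r * a m) n"
  by (induction q arbitrary: n) (simp_all add: algebra_simps)

lemma Lop_geom: "Lop q (\<lambda>m. r^m) n = r^n * pv q r"
  by (induction q arbitrary: n) (simp_all add: pv_Cons algebra_simps)

lemma Lop_lin: "Lop q (\<lambda>m. a m - k * b m) n = Lop q a n - k * Lop q b n"
  by (induction q arbitrary: n) (simp_all add: algebra_simps)

lemma Lop_cmult: "Lop q (\<lambda>m. k * b m) n = k * Lop q b n"
  by (induction q arbitrary: n) (simp_all add: algebra_simps)

lemma Lop_append: "Lop (xs @ ys) a n = Lop xs a n + Lop ys a (n + length xs)"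
  by (induction xs arbitrary: n) simp_all

lemma Lop_abs: "\<bar>Lop q a n\<bar> \<le> Lop (map abs q) (\<lambda>m. \<bar>a m\<bar>) n"
proof (induction q arbitrary: n)
  case Nil then show ?case by simp
next
  case (Cons c cs)
  have "\<bar>c * a n + Lop cs a (Suc n)\<bar> \<le> \<bar>c\<bar> * \<bar>a n\<bar> + \<bar>Lop cs a (Suc n)\<bar>"
    by (metis abs_mult abs_triangle_ineq)
  then show ?case using Cons[of "Suc n"] by simp
qed

lemma Lop_mono:
  assumes "\<forall>c\<in>set q. 0 \<le> c" "\<And>m. n \<le> m \<Longrightarrow> m < n + length q \<Longrightarrow> a m \<le> b m"
  shows "Lop q a n \<le> Lop q b n"
  using assms
proof (induction q arbitrary: n)
  case Nil then show ?case by simp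
next
  case (Cons c cs)
  have 1: "c * a n \<le> c * b n" using Cons.prems by (simp add: mult_left_mono)
  have 2: "Lop cs a (Suc n) \<le> Lop cs b (Suc n)" using Cons.prems by (intro Cons.IH) auto
  show ?case using 1 2 by simp
qed

lemma pv_mono_coeffs:
  assumes "list_all2 (\<lambda>x b. \<bar>x\<bar> \<le> b) xs bs" "0 \<le> R"
  shows "pv (map abs xs) R \<le> pv bs R"
  using assms
proof (induction xs bs rule: list_all2_induct)
  case Nil then show ?case by simp
next
  case (Cons x xs b bs)
  then show ?case by (simp add: pv_Cons add_mono mult_left_mono)
qed

lemma rec_bound:
  fixes f :: "nat \<Rightarrow> real"
  assumes Lz: "\<And>n. Lop (q' @ [1]) f n = 0" and R: "0 < R"
    and cb: "pv (map abs q') R \<le> R ^ length q'"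
  shows "\<exists>C. \<forall>n. \<bar>f n\<bar> \<le> C * R^n"
proof -
  define m where "m = length q'"
  define C where "C = (\<Sum>j<m. \<bar>f j\<bar> / R^j)"
  have C0: "0 \<le> C" unfolding C_def using R by (intro sum_nonneg divide_nonneg_pos) auto
  have "\<bar>f n\<bar> \<le> C * R^n" for n
  proof (induction n rule: less_induct)
    case (less n)
    show ?case
    proof (cases "n < m")
      case True
      have "\<bar>f n\<bar> / R^n \<le> C" unfolding C_def
        using True R by (intro member_le_sum) (auto intro!: divide_nonneg_pos)
      then show ?thesis using R by (simp add: divide_le_eq)
    next
      case False
      then obtain k where k: "n = k + m" by (metis add.commute le_add_diff_inverse not_less)
      have "Lop q' f k + f (k + m) = 0" using Lz[of k] by (simp add: Lop_append m_def)
      then have "\<bar>f n\<bar> = \<bar>Lop q' f k\<bar>" using k by simp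
      also have "\<dots> \<le> Lop (map abs q') (\<lambda>j. \<bar>f j\<bar>) k" by (rule Lop_abs)
      also have "\<dots> \<le> Lop (map abs q') (\<lambda>j. C * R^j) k"
        by (rule Lop_mono) (auto intro!: less.IH simp: k m_def)
      also have "\<dots> = C * (R^k * pv (map abs q') R)" by (simp add: Lop_cmult Lop_geom)
      also have "\<dots> \<le> C * (R^k * R^m)"
        using cb C0 R by (intro mult_left_mono) (simp_all add: m_def)
      also have "\<dots> = C * R^n" by (simp add: k power_add)
      finally show ?thesis .
    qed
  qed
  then show ?thesis by blast
qed

lemma asym_main:
  fixes a :: "nat \<Rightarrow> real"
  assumes recz: "\<And>n. Lop ps a n = 0" and root: "pv ps r = 0" and rpos: "0 < r"
    and S0: "pv (sd ps r) r \<noteq> 0" and split: "sd ps r = q' @ [1]"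
    and cb: "pv (map abs q') R \<le> R ^ length q'" and R: "0 < R" "R < r"
  shows "(\<lambda>n. a n / r^n) \<longlonglongrightarrow> Lop (sd ps r) a 0 / pv (sd ps r) r"
proof -
  define q where "q = sd ps r"
  define u where "u n = Lop q a n" for n
  define c where "c = u 0 / pv q r"
  have us: "u (Suc n) = r * u n" for n
  proof -
    have "u (Suc n) - r * u n = Lop q (\<lambda>m. a (Suc m) - r * a m) n"
      unfolding u_def by (rule Lop_shift)
    also have "\<dots> = Lop ps a n - pv ps r * a n" using Lop_sd[of ps a n r] unfolding q_def by linarith
    also have "\<dots> = 0" using recz[of n] root by simp
    finally show ?thesis by simp
  qed
  have un: "u n = u 0 * r^n" for n 
  proof (induction n)
    case 0 show ?case by simp
  next
    case (Suc n) show ?case unfolding us Suc by simp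
  qed
  define f where "f m = a m - c * r^m" for m
  have Lf: "Lop (q' @ [1]) f n = 0" for n
  proof -
    have "Lop q f n = Lop q a n - c * Lop q (\<lambda>m. r^m) n"
      unfolding f_def by (rule Lop_lin)
    also have "\<dots> = u n - c * (r^n * pv q r)" by (simp only: Lop_geom u_def)
    also have "\<dots> = 0" using S0 by (simp add: un[of n] c_def q_def)
    finally show ?thesis using split by (simp add: q_def)
  qed
  obtain C where C: "\<And>n. \<bar>f n\<bar> \<le> C * R^n" using rec_bound[OF Lf R(1) cb] by blast
  have lim0: "(\<lambda>n. f n / r^n) \<longlonglongrightarrow> 0"
  proof (rule tendsto_0_le)
    show "(\<lambda>n. (R/r)^n) \<longlonglongrightarrow> 0" using R rpos by (intro LIMSEQ_power_zero) simp
    show "\<forall>\<^sub>F n in sequentially. norm (f n / r^n) \<le> norm ((R/r)^n) * C"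
    proof (intro always_eventually allI)
      fix n
      have "norm (f n / r^n) = \<bar>f n\<bar> / r^n" using rpos by (simp add: abs_divide)
      also have "\<dots> \<le> C * R^n / r^n" using C[of n] rpos by (intro divide_right_mono) auto
      also have "\<dots> = norm ((R/r)^n) * C" using R rpos by (simp add: power_divide abs_of_pos)
      finally show "norm (f n / r^n) \<le> norm ((R/r)^n) * C" .
    qed
  qed
  have "(\<lambda>n. c + f n / r^n) \<longlonglongrightarrow> c + 0" by (intro tendsto_add tendsto_const lim0)
  moreover have "c + f n / r^n = a n / r^n" for n
  proof -
    have "r^n \<noteq> 0" using rpos by simp
    then show ?thesis unfolding f_def by (simp add: diff_divide_distrib)
  qed
  ultimately show ?thesis by (simp add: c_def u_def q_def)
qed

fun loh :: "int list \<Rightarrow> int \<Rightarrow> int \<Rightarrow> int \<Rightarrow> int" where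
  "loh [] N M S = 0"
| "loh (c#cs) N M S = c * S + (N * loh cs N M S) div M"

fun uph :: "int list \<Rightarrow> int \<Rightarrow> int \<Rightarrow> int \<Rightarrow> int" where
  "uph [] N M S = 0"
| "uph (c#cs) N M S = c * S + (N * uph cs N M S) div M + 1"

definition posl :: "int list \<Rightarrow> int list" where "posl cs = map (\<lambda>c. max c 0) cs"
definition negl :: "int list \<Rightarrow> int list" where "negl cs = map (\<lambda>c. max (- c) 0) cs"

lemma pv_nonneg:
  assumes "\<forall>c\<in>set cs. 0 \<le> c" "0 \<le> x"
  shows "0 \<le> pv (map real_of_int cs) x"
  using assms by (induction cs) (auto simp: pv_Cons)

lemma loh_nonneg:
  assumes "\<forall>c\<in>set cs. 0 \<le> c" "0 \<le> N" "0 < M" "0 \<le> S"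
  shows "0 \<le> loh cs N M S"
  using assms by (induction cs) (auto simp: pos_imp_zdiv_nonneg_iff)

lemma div_le_real: "0 < (M::int) \<Longrightarrow> real_of_int (a div M) \<le> real_of_int a / real_of_int M"
  by (metis floor_divide_of_int_eq of_int_floor_le)

lemma div_gt_real: "0 < (M::int) \<Longrightarrow> real_of_int a / real_of_int M < real_of_int (a div M) + 1"
  by (metis floor_divide_of_int_eq real_of_int_floor_add_one_gt)

lemma loh_le:
  assumes "\<forall>c\<in>set cs. 0 \<le> c" "0 \<le> N" "0 < M" "0 \<le> S" "real_of_int N / real_of_int M \<le> x"
  shows "real_of_int (loh cs N M S) \<le> real_of_int S * pv (map real_of_int cs) x"
  using assms
proof (induction cs)
  case Nil then show ?case by simp
next
  case (Cons c cs)
  define L where "L = loh cs N M S"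
  have L0: "0 \<le> L" unfolding L_def using Cons.prems by (intro loh_nonneg) auto
  have IH: "real_of_int L \<le> real_of_int S * pv (map real_of_int cs) x" unfolding L_def
    using Cons by auto
  have x0: "0 \<le> x" using Cons.prems by (meson divide_nonneg_pos of_int_0_le_iff of_int_0_less_iff order_trans)
  have "real_of_int ((N * L) div M) \<le> real_of_int (N * L) / real_of_int M"
    using Cons.prems by (intro div_le_real) auto
  also have "\<dots> = (real_of_int N / real_of_int M) * real_of_int L" by simp
  also have "\<dots> \<le> x * real_of_int L" using Cons.prems L0 by (intro mult_right_mono) auto
  also have "\<dots> \<le> x * (real_of_int S * pv (map real_of_int cs) x)" using x0 IH by (intro mult_left_mono)
  finally show ?case by (simp add: pv_Cons L_def algebra_simps)
qed

lemma uph_ge: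
  assumes "\<forall>c\<in>set cs. 0 \<le> c" "0 \<le> N" "0 < M" "0 \<le> S" "0 \<le> x" "x \<le> real_of_int N / real_of_int M"
  shows "real_of_int S * pv (map real_of_int cs) x \<le> real_of_int (uph cs N M S)"
  using assms
proof (induction cs)
  case Nil then show ?case by simp
next
  case (Cons c cs)
  define U where "U = uph cs N M S"
  have IH: "real_of_int S * pv (map real_of_int cs) x \<le> real_of_int U" unfolding U_def
    using Cons by auto
  have P0: "0 \<le> pv (map real_of_int cs) x" using Cons.prems by (intro pv_nonneg) auto
  have U0: "0 \<le> real_of_int U" using IH P0 Cons.prems by (smt (verit) of_int_0_le_iff zero_le_mult_iff)
  have "x * (real_of_int S * pv (map real_of_int cs) x) \<le> x * real_of_int U"
    using Cons.prems IH by (intro mult_left_mono) auto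
  also have "\<dots> \<le> (real_of_int N / real_of_int M) * real_of_int U"
    using Cons.prems U0 by (intro mult_right_mono) auto
  also have "\<dots> = real_of_int (N * U) / real_of_int M" by simp
  also have "\<dots> < real_of_int ((N * U) div M) + 1" using Cons.prems by (intro div_gt_real) auto
  finally show ?case by (simp add: pv_Cons U_def algebra_simps)
qed

lemma pv_split: "pv (map real_of_int cs) x = pv (map real_of_int (posl cs)) x - pv (map real_of_int (negl cs)) x"
proof (induction cs)
  case Nil then show ?case by (simp add: posl_def negl_def)
next
  case (Cons c cs)
  have m: "real_of_int c = real_of_int (max c 0) - real_of_int (max (-c) 0)" by (simp add: max_def)
  have "x * pv (map real_of_int cs) x = x * pv (map real_of_int (posl cs)) x - x * pv (map real_of_int (negl cs)) x"
    using Cons by (simp add: right_diff_distrib)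
  then show ?case using m by (simp add: pv_Cons posl_def negl_def)
qed

lemma posl_nonneg: "\<forall>c\<in>set (posl cs). 0 \<le> c" by (auto simp: posl_def)
lemma negl_nonneg: "\<forall>c\<in>set (negl cs). 0 \<le> c" by (auto simp: negl_def)

lemma pv_lower:
  assumes "0 \<le> N0" "0 < M" "0 \<le> S" "real_of_int N0 / real_of_int M \<le> x" "x \<le> real_of_int N1 / real_of_int M"
  shows "real_of_int (loh (posl cs) N0 M S - uph (negl cs) N1 M S) \<le> real_of_int S * pv (map real_of_int cs) x"
proof -
  have x0: "0 \<le> x" using assms by (meson divide_nonneg_pos of_int_0_le_iff of_int_0_less_iff order_trans)
  have N1: "0 \<le> N1" using assms x0
    by (smt (verit, ccfv_SIG) divide_nonneg_pos divide_neg_pos of_int_0_less_iff of_int_less_0_iff)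
  have 1: "real_of_int (loh (posl cs) N0 M S) \<le> real_of_int S * pv (map real_of_int (posl cs)) x"
    using assms by (intro loh_le posl_nonneg) auto
  have 2: "real_of_int S * pv (map real_of_int (negl cs)) x \<le> real_of_int (uph (negl cs) N1 M S)"
    using assms x0 N1 by (intro uph_ge negl_nonneg) auto
  have "real_of_int S * pv (map real_of_int cs) x = real_of_int S * pv (map real_of_int (posl cs)) x - real_of_int S * pv (map real_of_int (negl cs)) x"
    using pv_split[of cs x] by (simp add: right_diff_distrib)
  then show ?thesis using 1 2 by simp
qed

lemma pv_upper:
  assumes "0 \<le> N0" "0 < M" "0 \<le> S" "real_of_int N0 / real_of_int M \<le> x" "x \<le> real_of_int N1 / real_of_int M"
  shows "real_of_int S * pv (map real_of_int cs) x \<le> real_of_int (uph (posl cs) N1 M S - loh (negl cs) N0 M S)"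
proof -
  have x0: "0 \<le> x" using assms by (meson divide_nonneg_pos of_int_0_le_iff of_int_0_less_iff order_trans)
  have N1: "0 \<le> N1" using assms x0
    by (smt (verit, ccfv_SIG) divide_nonneg_pos divide_neg_pos of_int_0_less_iff of_int_less_0_iff)
  have 1: "real_of_int (loh (negl cs) N0 M S) \<le> real_of_int S * pv (map real_of_int (negl cs)) x"
    using assms by (intro loh_le negl_nonneg) auto
  have 2: "real_of_int S * pv (map real_of_int (posl cs)) x \<le> real_of_int (uph (posl cs) N1 M S)"
    using assms x0 N1 by (intro uph_ge posl_nonneg) auto
  have "real_of_int S * pv (map real_of_int cs) x = real_of_int S * pv (map real_of_int (posl cs)) x - real_of_int S * pv (map real_of_int (negl cs)) x"
    using pv_split[of cs x] by (simp add: right_diff_distrib)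
  then show ?thesis using 1 2 by simp
qed

lemma chk_pos:
  assumes "0 \<le> N0" "0 < M" "0 < S" "real_of_int N0 / real_of_int M \<le> x" "x \<le> real_of_int N1 / real_of_int M"
    and "0 < loh (posl cs) N0 M S - uph (negl cs) N1 M S"
  shows "0 < pv (map real_of_int cs) x"
proof -
  have "0 < real_of_int S * pv (map real_of_int cs) x"
    using pv_lower[of N0 M S x N1 cs] assms by (smt (verit) of_int_pos)
  then show ?thesis using assms(3) by (simp add: zero_less_mult_iff)
qed

lemma scale_le:
  fixes v u b K S :: real
  assumes "S * v \<le> u" "K * u \<le> b * S" "0 < K" "0 < S"
  shows "v \<le> b / K"
proof -
  have "K * (S * v) \<le> K * u" using assms by (intro mult_left_mono) auto
  then have "S * (K * v) \<le> S * b" using assms(2) by (simp add: algebra_simps)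
  then have "K * v \<le> b" using assms(4) by simp
  then show ?thesis using assms(3) by (simp add: pos_le_divide_eq mult.commute)
qed

lemma scale_ge:
  fixes v u b K S :: real
  assumes "u \<le> S * v" "- (b * S) \<le> K * u" "0 < K" "0 < S"
  shows "- (b / K) \<le> v"
proof -
  have "K * u \<le> K * (S * v)" using assms by (intro mult_left_mono) auto
  then have "S * (- b) \<le> S * (K * v)" using assms(2) by (simp add: algebra_simps)
  then have "- b \<le> K * v" using assms(4) mult_le_cancel_left_pos by blast
  then have "(- b) / K \<le> v" using assms(3) by (metis pos_divide_le_eq mult.commute)
  then show ?thesis by (metis minus_divide_left)
qed

lemma chk_abs:
  assumes "0 \<le> N0" "0 < M" "0 < S" "real_of_int N0 / real_of_int M \<le> x" "x \<le> real_of_int N1 / real_of_int M"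
    and "0 < K"
    and "K * (uph (posl cs) N1 M S - loh (negl cs) N0 M S) \<le> b * S"
    and "- (b * S) \<le> K * (loh (posl cs) N0 M S - uph (negl cs) N1 M S)"
  shows "\<bar>pv (map real_of_int cs) x\<bar> \<le> real_of_int b / real_of_int K"
proof -
  have lo: "real_of_int (loh (posl cs) N0 M S - uph (negl cs) N1 M S) \<le> real_of_int S * pv (map real_of_int cs) x"
    using assms by (intro pv_lower) auto
  have hi: "real_of_int S * pv (map real_of_int cs) x \<le> real_of_int (uph (posl cs) N1 M S - loh (negl cs) N0 M S)"
    using assms by (intro pv_upper) auto
  have a1: "real_of_int K * real_of_int (uph (posl cs) N1 M S - loh (negl cs) N0 M S) \<le> real_of_int b * real_of_int S"
    using assms(7) by (metis of_int_le_iff of_int_mult)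
  have a2: "- (real_of_int b * real_of_int S) \<le> real_of_int K * real_of_int (loh (posl cs) N0 M S - uph (negl cs) N1 M S)"
    using assms(8) by (metis of_int_le_iff of_int_minus of_int_mult)
  have K0: "0 < real_of_int K" "0 < real_of_int S" using assms by auto
  have "pv (map real_of_int cs) x \<le> real_of_int b / real_of_int K"
    by (rule scale_le[OF hi a1 K0])
  moreover have "- (real_of_int b / real_of_int K) \<le> pv (map real_of_int cs) x"
    by (rule scale_ge[OF lo a2 K0])
  ultimately show ?thesis by (simp add: abs_le_iff)
qed

definition bad :: "nat \<Rightarrow> nat \<Rightarrow> nat \<Rightarrow> bool" where
  "bad x y z \<longleftrightarrow> (2 \<le> x \<and> 5 \<le> y \<and> 2 \<le> z) \<or> (3 \<le> x \<and> 4 \<le> y \<and> 3 \<le> z) \<or> (4 \<le> x \<and> 2 \<le> y \<and> 4 \<le> z)"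

fun good :: "nat list \<Rightarrow> bool" where
  "good (x#y#z#rest) = (\<not> bad x y z \<and> good (y#z#rest))"
| "good _ = True"

lemma good_iff: "good xs \<longleftrightarrow> (\<forall>i. i + 3 \<le> length xs \<longrightarrow> \<not> bad (xs!i) (xs!(i+1)) (xs!(i+2)))"
proof (induction xs rule: good.induct)
  case (1 x y z rest)
  show ?case (is "?L \<longleftrightarrow> ?R")
  proof
    assume L: ?L
    show ?R
    proof (intro allI impI)
      fix i assume i: "i + 3 \<le> length (x#y#z#rest)"
      show "\<not> bad ((x#y#z#rest)!i) ((x#y#z#rest)!(i+1)) ((x#y#z#rest)!(i+2))"
      proof (cases i)
        case 0 then show ?thesis using L by simp
      next
        case (Suc j)
        have "good (y#z#rest)" using L by simp
        then have "\<not> bad ((y#z#rest)!j) ((y#z#rest)!(j+1)) ((y#z#rest)!(j+2))"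
          using 1 i Suc by simp
        then show ?thesis using Suc by simp
      qed
    qed
  next
    assume R: ?R
    have "\<not> bad x y z" using R[rule_format, of 0] by simp
    moreover have "good (y#z#rest)" unfolding 1
    proof (intro allI impI)
      fix i assume "i + 3 \<le> length (y#z#rest)"
      then show "\<not> bad ((y#z#rest)!i) ((y#z#rest)!(i+1)) ((y#z#rest)!(i+2))"
        using R[rule_format, of "Suc i"] by simp
    qed
    ultimately show ?L by simp
  qed
qed auto

lemma includes3: "comp_includes xs [a,b,c] \<longleftrightarrow>
    (\<exists>i. i + 3 \<le> length xs \<and> a \<le> xs!i \<and> b \<le> xs!(i+1) \<and> c \<le> xs!(i+2))"
proof -
  have e: "(\<forall>j<length [a,b,c]. [a,b,c]!j \<le> xs!(i+j)) \<longleftrightarrow> a \<le> xs!i \<and> b \<le> xs!(i+1) \<and> c \<le> xs!(i+2)" for i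
  proof
    assume H: "\<forall>j<length [a,b,c]. [a,b,c]!j \<le> xs!(i+j)"
    show "a \<le> xs!i \<and> b \<le> xs!(i+1) \<and> c \<le> xs!(i+2)"
      using H[rule_format, of 0] H[rule_format, of 1] H[rule_format, of 2] by simp
  next
    assume H: "a \<le> xs!i \<and> b \<le> xs!(i+1) \<and> c \<le> xs!(i+2)"
    show "\<forall>j<length [a,b,c]. [a,b,c]!j \<le> xs!(i+j)"
    proof (intro allI impI)
      fix j assume "j < length [a,b,c]"
      then have "j = 0 \<or> j = 1 \<or> j = 2" by auto
      then show "[a,b,c]!j \<le> xs!(i+j)" using H by auto
    qed
  qed
  show ?thesis unfolding comp_includes_def e by (auto simp: numeral_3_eq_3)
qed

lemma avoid_iff_good:
  "(comp_avoids xs [2,5,2] \<and> comp_avoids xs [3,4,3] \<and> comp_avoids xs [4,2,4]) \<longleftrightarrow> good xs"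
  unfolding comp_avoids_def includes3 good_iff bad_def by blast

lemma good_1: "good (1 # xs) = good xs"
proof (cases xs)
  case Nil then show ?thesis by simp
next
  case (Cons y ys) then show ?thesis by (cases ys) (auto simp: bad_def)
qed

definition CS :: "nat \<Rightarrow> nat \<Rightarrow> nat \<Rightarrow> nat list set" where
  "CS n x y = {xs. (\<forall>a\<in>set xs. 0 < a) \<and> sum_list xs = n \<and> good (x#y#xs)}"

lemma a_count_CS: "a_count n = card (CS n 1 1)"
proof -
  have "{as. is_composition n as \<and> comp_avoids as [2,5,2] \<and> comp_avoids as [3,4,3] \<and> comp_avoids as [4,2,4]}
        = CS n 1 1"
    unfolding CS_def is_composition_def using avoid_iff_good good_1 by auto
  then show ?thesis unfolding a_count_def by simp
qed

lemma length_le_sum: "\<forall>a\<in>set xs. 0 < (a::nat) \<Longrightarrow> length xs \<le> sum_list xs"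
  by (induction xs) auto

lemma CS_finite: "finite (CS n x y)"
proof (rule finite_subset)
  show "CS n x y \<subseteq> {xs. set xs \<subseteq> {..n} \<and> length xs \<le> n}"
  proof
    fix xs assume "xs \<in> CS n x y"
    then have h: "\<forall>a\<in>set xs. 0 < a" "sum_list xs = n" unfolding CS_def by auto
    have "set xs \<subseteq> {..n}" using h member_le_sum_list by fastforce
    moreover have "length xs \<le> n" using h length_le_sum by metis
    ultimately show "xs \<in> {xs. set xs \<subseteq> {..n} \<and> length xs \<le> n}" by simp
  qed
  show "finite {xs. set xs \<subseteq> {..n} \<and> length xs \<le> n}"
    by (rule finite_lists_length_le) simp
qed

lemma CS_0: "CS 0 x y = {[]}"
proof -
  have "xs = []" if "xs \<in> CS 0 x y" for xs
  proof (cases xs)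
    case (Cons z rest)
    then have "0 < z" "z + sum_list rest = 0" using that unfolding CS_def by auto
    then show ?thesis by simp
  qed simp
  moreover have "[] \<in> CS 0 x y" unfolding CS_def by simp
  ultimately show ?thesis by blast
qed

lemma CS_pos: assumes "0 < n"
  shows "CS n x y = (\<Union>z\<in>{1..n}. if bad x y z then {} else (Cons z) ` CS (n - z) y z)"
proof (intro equalityI subsetI)
  fix xs assume xs: "xs \<in> CS n x y"
  then have "xs \<noteq> []" using assms unfolding CS_def by auto
  then obtain z rest where zr: "xs = z # rest" by (cases xs) auto
  have z: "0 < z" "sum_list rest = n - z" "z \<le> n" "good (x#y#z#rest)" "\<forall>a\<in>set rest. 0 < a"
    using xs zr unfolding CS_def by auto
  then have "\<not> bad x y z" "good (y#z#rest)" by auto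
  then show "xs \<in> (\<Union>z\<in>{1..n}. if bad x y z then {} else (Cons z) ` CS (n - z) y z)"
    using z zr unfolding CS_def by (auto intro!: bexI[of _ z])
next
  fix xs assume "xs \<in> (\<Union>z\<in>{1..n}. if bad x y z then {} else (Cons z) ` CS (n - z) y z)"
  then obtain z rest where "z \<in> {1..n}" "\<not> bad x y z" "rest \<in> CS (n - z) y z" "xs = z # rest"
    by (auto split: if_splits)
  then show "xs \<in> CS n x y" unfolding CS_def by auto
qed

definition cnt :: "nat \<Rightarrow> nat \<Rightarrow> nat \<Rightarrow> nat" where "cnt n x y = card (CS n x y)"

lemma cnt_0: "cnt 0 x y = 1" by (simp add: cnt_def CS_0)

lemma cnt_pos: assumes "0 < n"
  shows "cnt n x y = (\<Sum>z\<in>{1..n}. if bad x y z then 0 else cnt (n - z) y z)"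
proof -
  have "cnt n x y = card (\<Union>z\<in>{1..n}. if bad x y z then {} else (Cons z) ` CS (n - z) y z)"
    unfolding cnt_def using CS_pos[OF assms] by simp
  also have "\<dots> = (\<Sum>z\<in>{1..n}. card (if bad x y z then {} else (Cons z) ` CS (n - z) y z))"
    by (rule card_UN_disjoint) (auto simp: CS_finite split: if_splits)
  also have "\<dots> = (\<Sum>z\<in>{1..n}. if bad x y z then 0 else cnt (n - z) y z)"
    by (intro sum.cong refl) (auto simp: cnt_def card_image)
  finally show ?thesis .
qed

lemma bad_cap1: "4 \<le> k \<Longrightarrow> bad (min x k) y z = bad x y z" by (auto simp: bad_def min_def)
lemma bad_cap2: "bad x (min y 5) z = bad x y z" by (auto simp: bad_def min_def)

lemma good_cap1: assumes "4 \<le> k" shows "good (min x k # xs) = good (x # xs)"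
proof (cases xs)
  case Nil then show ?thesis by simp
next
  case (Cons y ys) then show ?thesis using bad_cap1[OF assms] by (cases ys) auto
qed

lemma good_cap2: "good (x # min y 5 # xs) = good (x # y # xs)"
proof (cases xs)
  case Nil then show ?thesis by simp
next
  case (Cons z zs)
  have "good (min y 5 # z # zs) = good (y # z # zs)" by (rule good_cap1) simp
  then show ?thesis using Cons bad_cap2 by simp
qed

lemma CS_cap: "CS n x y = CS n (min x 4) (min y 5)"
  unfolding CS_def using good_cap1[of 4 x] good_cap2 by simp

lemma cnt_cap: "cnt n x y = cnt n (min x 4) (min y 5)"
  unfolding cnt_def using CS_cap by simp

definition F :: "nat \<Rightarrow> nat \<Rightarrow> real fps" where "F x y = Abs_fps (\<lambda>n. real (cnt n x y))"
definition G :: "real fps" where "G = Abs_fps (\<lambda>_. 1)"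
definition tz :: "(nat \<Rightarrow> nat \<Rightarrow> real fps) \<Rightarrow> nat \<Rightarrow> nat \<Rightarrow> nat \<Rightarrow> real fps" where
  "tz H x y z = (if bad x y z then 0 else fps_X ^ z * H (min y 4) z)"
definition Op :: "(nat \<Rightarrow> nat \<Rightarrow> real fps) \<Rightarrow> nat \<Rightarrow> nat \<Rightarrow> real fps" where
  "Op H x y = tz H x y 1 + tz H x y 2 + tz H x y 3 + tz H x y 4
     + (if bad x y 5 then 0 else fps_X ^ 5 * (H (min y 4) 5 * G))"

lemma sum14: "(\<Sum>z\<in>{1..4::nat}. f z) = f 1 + f 2 + f 3 + (f 4 :: real)"
proof -
  have "{1..4::nat} = {1,2,3,4}" by auto
  then show ?thesis by (simp add: algebra_simps)
qed

lemma bad_ge5: "5 \<le> z \<Longrightarrow> bad x y z = ((2 \<le> x \<and> 5 \<le> y) \<or> (3 \<le> x \<and> 4 \<le> y) \<or> (4 \<le> x \<and> 2 \<le> y))"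
  by (auto simp: bad_def)

lemma cnt_split: assumes "0 < n"
  shows "real (cnt n x y) = (\<Sum>z\<in>{1..4}. if bad x y z \<or> n < z then 0 else real (cnt (n-z) (min y 4) z))
     + (if bad x y 5 \<or> n < 5 then 0 else \<Sum>i\<le>n-5. real (cnt i (min y 4) 5))"
proof -
  define g where "g z = (if bad x y z then 0 else real (cnt (n - z) (min y 4) (min z 5)))" for z
  have c: "cnt (n - z) y z = cnt (n - z) (min y 4) (min z 5)" for z by (rule cnt_cap)
  have "real (cnt n x y) = (\<Sum>z\<in>{1..n}. g z)"
    unfolding cnt_pos[OF assms] g_def of_nat_sum
    by (intro sum.cong refl) (simp add: c)
  also have "\<dots> = (\<Sum>z\<in>{1..n} \<inter> {1..4}. g z) + (\<Sum>z\<in>{1..n} - {1..4}. g z)"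
    by (rule sum.Int_Diff) simp
  also have "(\<Sum>z\<in>{1..n} \<inter> {1..4}. g z) = (\<Sum>z\<in>{1..4}. if bad x y z \<or> n < z then 0 else real (cnt (n-z) (min y 4) z))"
    by (rule sum.mono_neutral_cong_left) (auto simp: g_def)
  also have "{1..n} - {1..4} = {5..n}" by auto
  also have "(\<Sum>z\<in>{5..n}. g z) = (if bad x y 5 \<or> n < 5 then 0 else \<Sum>i\<le>n-5. real (cnt i (min y 4) 5))"
  proof (cases "bad x y 5 \<or> n < 5")
    case True
    then show ?thesis
    proof
      assume b: "bad x y 5"
      then show ?thesis by (auto simp: g_def bad_ge5 intro!: sum.neutral)
    next
      assume "n < 5" then show ?thesis by simp
    qed
  next
    case False
    then have nb: "\<not> bad x y 5" "5 \<le> n" by auto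
    have "(\<Sum>z\<in>{5..n}. g z) = (\<Sum>z\<in>{5..n}. real (cnt (n - z) (min y 4) 5))"
      using nb by (intro sum.cong refl) (auto simp: g_def bad_ge5)
    also have "\<dots> = (\<Sum>i\<le>n-5. real (cnt i (min y 4) 5))"
      by (rule sum.reindex_bij_witness[where i = "\<lambda>b. n - b" and j = "\<lambda>a. n - a"]) (use nb in auto)
    finally show ?thesis using False by simp
  qed
  finally show ?thesis .
qed

lemma tz_nth: "fps_nth (tz H x y z) n = (if bad x y z \<or> n < z then 0 else fps_nth (H (min y 4) z) (n - z))"
  by (simp add: tz_def fps_X_power_mult_nth)

lemma last_nth: "fps_nth (fps_X ^ 5 * (H (a::nat) (5::nat) * G)) n = (if n < 5 then 0 else \<Sum>i\<le>n-5. fps_nth (H a 5) i)"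
proof -
  have "fps_nth (H a 5 * G) m = (\<Sum>i\<le>m. fps_nth (H a 5) i)" for m
    by (simp add: fps_mult_nth G_def atLeast0AtMost)
  then show ?thesis by (simp only: fps_X_power_mult_nth)
qed

lemma F_nth: "fps_nth (F x y) n = real (cnt n x y)" by (simp add: F_def)

lemma last_nth2: "fps_nth (if bad x y 5 then 0 else fps_X ^ 5 * (F a 5 * G)) n
   = (if bad x y 5 \<or> n < 5 then 0 else \<Sum>i\<le>n-5. real (cnt i a 5))"
  by (simp add: last_nth F_nth)

lemma F_eq: "F x y = 1 + Op F x y"
proof (rule fps_ext)
  fix n
  show "fps_nth (F x y) n = fps_nth (1 + Op F x y) n"
  proof (cases "n = 0")
    case True
    then show ?thesis by (simp add: F_nth cnt_0 Op_def tz_nth last_nth)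
  next
    case False
    have e: "real (cnt n x y) = (\<Sum>z\<in>{1..4}. if bad x y z \<or> n < z then 0 else real (cnt (n-z) (min y 4) z))
     + (if bad x y 5 \<or> n < 5 then 0 else \<Sum>i\<le>n-5. real (cnt i (min y 4) 5))"
      using False by (intro cnt_split) simp
    have o: "fps_nth (1 :: real fps) n = 0" using False by simp
    show ?thesis unfolding F_nth e sum14 Op_def fps_add_nth tz_nth last_nth2 o F_nth
      by simp
  qed
qed

definition fp :: "real list \<Rightarrow> real fps" where "fp xs = fps_of_poly (Poly xs)"

fun pmul :: "real list \<Rightarrow> real list \<Rightarrow> real list" where
  "pmul [] ys = []"
| "pmul (x#xs) ys = padd (map (\<lambda>a. x * a) ys) (0 # pmul xs ys)"

lemma fp_Nil: "fp [] = 0" by (simp add: fp_def)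
lemma fp_Cons: "fp (x#xs) = fps_const x + fp xs * fps_X" by (simp add: fp_def fps_of_poly_pCons)

lemma fp_padd: "fp (padd xs ys) = fp xs + fp ys"
  by (induction xs ys rule: padd.induct) (simp_all add: fp_Cons fp_Nil algebra_simps)

lemma fp_map: "fp (map (\<lambda>a. c * a) xs) = fps_const c * fp xs"
  by (induction xs) (simp_all add: fp_Cons fp_Nil algebra_simps)

lemma fp_pmul: "fp (pmul xs ys) = fp xs * fp ys"
  by (induction xs) (simp_all add: fp_Cons fp_Nil fp_padd fp_map algebra_simps)

lemma fp_rep: "fp (replicate k 0 @ xs) = fps_X ^ k * fp xs"
  by (induction k) (simp_all add: fp_Cons algebra_simps)

lemma fp_zero: "list_all (\<lambda>a. a = 0) xs \<Longrightarrow> fp xs = 0"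
  by (induction xs) (simp_all add: fp_Cons fp_Nil)

lemma fp_1X: "fp [1, -1] = 1 - fps_X"
  by (simp add: fp_Cons fp_Nil fps_const_neg[symmetric] del: fps_const_neg)

definition Ptab :: "real list list" where
  "Ptab = [[-1, 2, -1, 0, -1, 1, -1, 0, 0, 0, -1, 3, 0, -1, -3, 0, 0, -1],
   [-1, 2, -1, 0, -1, 1, -1, 1, 0, 0, -1, 3, -2, 0, -1, 1],
   [-1, 2, -1, 0, -1, 1, -1, 2, -1, 0, -1, 1, 0, 1, -1],
   [-1, 2, -1, 0, -1, 1, 0, 2, -2, -1, -2, 3, 0, -1, 1],
   [-1, 2, -1, 0, -1, 1, 0, 2, -2, -1, -2, 3, 0, -1, 1],
   [-1, 2, -1, 0, -1, 1, -1, 0, 0, 0, -1, 3, 0, -1, -3, 0, 0, -1],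
   [-1, 2, -1, 0, -1, 1, -1, 1, 0, 0, -1, 3, -2, 0, -1, 1],
   [-1, 2, -1, 0, -1, 1, -1, 2, -1, 0, -1, 1, 0, 1, -1],
   [-1, 2, -1, 0, -1, 1, 0, 2, -2, -1, -2, 3, 0, -1, 1],
   [-1, 2, 0, -1, -1, 1, 0, 0, 1, 0, -3, 2, 1, -2, 1],
   [-1, 2, -1, 0, -1, 1, -1, 0, 0, 0, -1, 3, 0, -1, -3, 0, 0, -1],
   [-1, 2, -1, 0, -1, 1, -1, 1, 0, 0, -1, 3, -2, 0, -1, 1],
   [-1, 2, -1, 0, -1, 1, -1, 2, -1, 0, -1, 1, 0, 1, -1],
   [-1, 2, -1, 1, -2, 1, 0, 0, 0, 0, -2, 2, 0, -1, 1],
   [-1, 2, 0, -1, -1, 1, 0, 0, 1, 0, -3, 2, 1, -2, 1],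
   [-1, 2, -1, 0, -1, 1, -1, 0, 0, 0, -1, 3, 0, -1, -3, 0, 0, -1],
   [-1, 2, -1, 0, 0, 0, -1, 0, 1, 0, -1, 1],
   [-1, 2, -1, 0, 0, 0, -1, 0, 1, 0, -1, 1],
   [-1, 2, -1, 1, -2, 1, 0, 0, 0, 0, -2, 2, 0, -1, 1],
   [-1, 2, 0, -1, -1, 1, 0, 0, 1, 0, -3, 2, 1, -2, 1]]"

definition Pt :: "nat \<Rightarrow> nat \<Rightarrow> real list" where "Pt x y = Ptab ! ((x - 1) * 5 + (y - 1))"
definition dl :: "real list" where "dl = [-1, 3, -2, 0, -1, 2, -1, 1, 1, 0, -3, 3, -2, -2, 2, 3, 0, 0, 1]"

definition Pf :: "nat \<Rightarrow> nat \<Rightarrow> real fps" where "Pf x y = fp (Pt x y)"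
definition Dn :: "real fps" where "Dn = fp dl"

definition tzL :: "nat \<Rightarrow> nat \<Rightarrow> nat \<Rightarrow> real list" where
  "tzL x y z = (if bad x y z then [] else pmul [1, -1] (replicate z 0 @ Pt (min y 4) z))"
definition rhsL :: "nat \<Rightarrow> nat \<Rightarrow> real list" where
  "rhsL x y = padd (pmul [1, -1] dl) (padd (tzL x y 1) (padd (tzL x y 2) (padd (tzL x y 3)
     (padd (tzL x y 4) (if bad x y 5 then [] else replicate 5 0 @ Pt (min y 4) 5)))))"
definition lhsL :: "nat \<Rightarrow> nat \<Rightarrow> real list" where "lhsL x y = pmul [1, -1] (Pt x y)"
definition chk :: "nat \<Rightarrow> nat \<Rightarrow> bool" where
  "chk x y = list_all (\<lambda>a. a = 0) (padd (lhsL x y) (map (\<lambda>a. -1 * a) (rhsL x y)))"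

lemma rep1: "replicate 1 (0::real) = [0]" by (simp add: numeral_eq_Suc)
lemma rep2: "replicate 2 (0::real) = [0, 0]" by (simp add: numeral_eq_Suc)
lemma rep3: "replicate 3 (0::real) = [0, 0, 0]" by (simp add: numeral_eq_Suc)
lemma rep4: "replicate 4 (0::real) = [0, 0, 0, 0]" by (simp add: numeral_eq_Suc)
lemma rep5: "replicate 5 (0::real) = [0, 0, 0, 0, 0]" by (simp add: numeral_eq_Suc)

lemmas chk_simps = chk_def lhsL_def rhsL_def tzL_def Pt_def Ptab_def dl_def bad_def rep1 rep2 rep3 rep4 rep5

lemma chk_1_1: "chk 1 1" by (simp add: chk_simps)
lemma chk_1_2: "chk 1 2" by (simp add: chk_simps)
lemma chk_1_3: "chk 1 3" by (simp add: chk_simps)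
lemma chk_1_4: "chk 1 4" by (simp add: chk_simps)
lemma chk_1_5: "chk 1 5" by (simp add: chk_simps)
lemma chk_2_1: "chk 2 1" by (simp add: chk_simps)
lemma chk_2_2: "chk 2 2" by (simp add: chk_simps)
lemma chk_2_3: "chk 2 3" by (simp add: chk_simps)
lemma chk_2_4: "chk 2 4" by (simp add: chk_simps)
lemma chk_2_5: "chk 2 5" by (simp add: chk_simps)
lemma chk_3_1: "chk 3 1" by (simp add: chk_simps)
lemma chk_3_2: "chk 3 2" by (simp add: chk_simps)
lemma chk_3_3: "chk 3 3" by (simp add: chk_simps)
lemma chk_3_4: "chk 3 4" by (simp add: chk_simps)
lemma chk_3_5: "chk 3 5" by (simp add: chk_simps)
lemma chk_4_1: "chk 4 1" by (simp add: chk_simps)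
lemma chk_4_2: "chk 4 2" by (simp add: chk_simps)
lemma chk_4_3: "chk 4 3" by (simp add: chk_simps)
lemma chk_4_4: "chk 4 4" by (simp add: chk_simps)
lemma chk_4_5: "chk 4 5" by (simp add: chk_simps)

definition St :: "nat \<Rightarrow> nat \<Rightarrow> bool" where "St x y \<longleftrightarrow> 1 \<le> x \<and> x \<le> 4 \<and> 1 \<le> y \<and> y \<le> 5"

lemma chk_all: assumes "St x y" shows "chk x y"
proof -
  have "x \<in> {1,2,3,4}" "y \<in> {1,2,3,4,5}" using assms unfolding St_def by auto
  then show ?thesis
    using chk_1_1 chk_1_2 chk_1_3 chk_1_4 chk_1_5 chk_2_1 chk_2_2 chk_2_3 chk_2_4 chk_2_5
      chk_3_1 chk_3_2 chk_3_3 chk_3_4 chk_3_5 chk_4_1 chk_4_2 chk_4_3 chk_4_4 chk_4_5 by auto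
qed

lemma G_inv: "(1 - fps_X) * G = 1"
proof (rule fps_ext)
  fix n
  show "fps_nth ((1 - fps_X) * G) n = fps_nth 1 n"
    by (simp add: G_def algebra_simps fps_X_mult_nth)
qed

lemma fp_tzL: "fp (tzL x y z) = (1 - fps_X) * tz Pf x y z"
  unfolding tzL_def tz_def by (simp add: fp_pmul fp_rep fp_1X Pf_def fp_Nil del: pmul.simps)

lemma fp_lhsL: "fp (lhsL x y) = (1 - fps_X) * Pf x y"
  unfolding lhsL_def fp_pmul fp_1X Pf_def ..

lemma fp_rhsL: "fp (rhsL x y) = (1 - fps_X) * (Dn + Op Pf x y)"
proof -
  have l: "(1 - fps_X) * (if bad x y 5 then 0 else fps_X ^ 5 * (Pf (min y 4) 5 * G))
        = (if bad x y 5 then 0 else fps_X ^ 5 * Pf (min y 4) 5)"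
  proof -
    have "(1 - fps_X) * (fps_X ^ 5 * (Pf (min y 4) 5 * G)) = fps_X ^ 5 * Pf (min y 4) 5 * ((1 - fps_X) * G)"
      by (simp add: algebra_simps)
    then show ?thesis by (simp add: G_inv)
  qed
  have r: "fp (if bad x y 5 then [] else replicate 5 0 @ Pt (min y 4) 5) = (if bad x y 5 then 0 else fps_X ^ 5 * Pf (min y 4) 5)"
    by (simp add: fp_rep Pf_def fp_Nil)
  show ?thesis unfolding rhsL_def fp_padd fp_tzL r Op_def distrib_left l[symmetric] fp_pmul fp_1X Dn_def
    by (simp add: algebra_simps)
qed

lemma fp_chk: assumes "chk x y" shows "fp (lhsL x y) = fp (rhsL x y)"
proof -
  have "fp (padd (lhsL x y) (map (\<lambda>a. -1 * a) (rhsL x y))) = 0"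
    using assms unfolding chk_def by (rule fp_zero)
  then have "fp (lhsL x y) + fps_const (-1) * fp (rhsL x y) = 0" unfolding fp_padd fp_map .
  moreover have "fps_const (-1::real) = -1" by (metis fps_const_1_eq_1 fps_const_neg)
  ultimately have "fp (lhsL x y) - fp (rhsL x y) = 0" by simp
  then show ?thesis by simp
qed

lemma one_minus_X_nz: "(1 - fps_X :: real fps) \<noteq> 0"
proof
  assume "(1 - fps_X :: real fps) = 0"
  then have "fps_nth (1 - fps_X :: real fps) 0 = 0" by simp
  then show False by simp
qed

lemma Pf_eq: assumes "St x y" shows "Pf x y = Dn + Op Pf x y"
proof -
  have "(1 - fps_X) * Pf x y = (1 - fps_X) * (Dn + Op Pf x y)"
    using fp_chk[OF chk_all[OF assms]] by (simp add: fp_lhsL fp_rhsL)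
  then show ?thesis using one_minus_X_nz by simp
qed

definition E :: "nat \<Rightarrow> nat \<Rightarrow> real fps" where "E x y = Dn * F x y - Pf x y"

lemma tz_lin: "tz (\<lambda>a b. D * H1 a b - H2 a b) x y z = D * tz H1 x y z - tz H2 x y z"
  by (simp add: tz_def algebra_simps)

lemma Op_lin: "Op (\<lambda>a b. D * H1 a b - H2 a b) x y = D * Op H1 x y - Op H2 x y"
  unfolding Op_def tz_lin by (simp add: algebra_simps)

lemma E_eq: assumes "St x y" shows "E x y = Op E x y"
proof -
  have "E x y = Dn * (1 + Op F x y) - (Dn + Op Pf x y)"
    unfolding E_def using F_eq[of x y] Pf_eq[OF assms] by simp
  also have "\<dots> = Dn * Op F x y - Op Pf x y" by (simp add: algebra_simps)
  also have "\<dots> = Op (\<lambda>a b. Dn * F a b - Pf a b) x y" by (rule Op_lin[symmetric])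
  finally show ?thesis unfolding E_def[abs_def] .
qed

lemma St_next: "St x y \<Longrightarrow> 1 \<le> z \<Longrightarrow> z \<le> 5 \<Longrightarrow> St (min y 4) z"
  by (auto simp: St_def)

lemma Op_nth_zero:
  assumes "St x y" and IH: "\<And>a b m. St a b \<Longrightarrow> m < n \<Longrightarrow> fps_nth (E a b) m = 0"
  shows "fps_nth (Op E x y) n = 0"
proof -
  have t: "fps_nth (tz E x y z) n = 0" if "1 \<le> z" "z \<le> 5" for z
    unfolding tz_nth using IH[OF St_next[OF assms(1) that]] that by auto
  have l: "fps_nth (if bad x y 5 then 0 else fps_X ^ 5 * (E (min y 4) 5 * G)) n = 0"
    using IH[OF St_next[OF assms(1), of 5]] by (simp add: last_nth)
  show ?thesis unfolding Op_def fps_add_nth using t l by simp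
qed

lemma E_zero: "St x y \<Longrightarrow> E x y = 0"
proof -
  have "\<forall>x y. St x y \<longrightarrow> fps_nth (E x y) n = 0" for n
  proof (induction n rule: less_induct)
    case (less n)
    show ?case
    proof (intro allI impI)
      fix x y assume s: "St x y"
      have "fps_nth (E x y) n = fps_nth (Op E x y) n" using E_eq[OF s] by simp
      also have "\<dots> = 0" using s less by (intro Op_nth_zero) auto
      finally show "fps_nth (E x y) n = 0" .
    qed
  qed
  then show "St x y \<Longrightarrow> E x y = 0" by (intro fps_ext) simp
qed

lemma main_fps: "Dn * F 1 1 = Pf 1 1"
  using E_zero[of 1 1] by (simp add: E_def St_def)

definition numl :: "real list" where "numl = [1, -2, 1, 0, 1, -1, 1, 0, 0, 0, 1, -3, 0, 1, 3, 0, 0, 1]"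

lemma fp_nth: "fps_nth (fp xs) n = nth_default 0 xs n"
  by (simp add: fp_def)

lemma nth_default_big: "length xs \<le> n \<Longrightarrow> nth_default 0 xs n = 0"
  by (simp add: nth_default_def)

lemma lt19: "(n::nat) < 19 \<Longrightarrow> n = 0 \<or> n = 1 \<or> n = 2 \<or> n = 3 \<or> n = 4 \<or> n = 5 \<or> n = 6 \<or> n = 7 \<or> n = 8 \<or> n = 9 \<or> n = 10 \<or> n = 11 \<or> n = 12 \<or> n = 13 \<or> n = 14 \<or> n = 15 \<or> n = 16 \<or> n = 17 \<or> n = 18"
  by presburger

lemma gf_den_fp: "gf_den = fp dl"
proof (rule fps_ext)
  fix n
  show "fps_nth gf_den n = fps_nth (fp dl) n"
  proof (cases "n < 19")
    case True
    have "fps_nth (fp dl) n = dl ! n" using True by (simp add: fp_nth nth_default_nth dl_def)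
    then show ?thesis using lt19[OF True]
      by (elim disjE) (simp_all add: gf_den_def dl_def fps_X_power_nth numeral_fps_const fps_X_nth)
  next
    case False
    then show ?thesis
      by (simp add: gf_den_def fp_nth dl_def fps_X_power_nth numeral_fps_const fps_X_nth nth_default_big)
  qed
qed

lemma gf_num_fp: "gf_num = fp numl"
proof (rule fps_ext)
  fix n
  show "fps_nth gf_num n = fps_nth (fp numl) n"
  proof (cases "n < 19")
    case True
    have "fps_nth (fp numl) n = (if n < 18 then numl ! n else 0)" using True
      by (simp add: fp_nth nth_default_nth numl_def nth_default_big)
    then show ?thesis using lt19[OF True]
      by (elim disjE) (simp_all add: gf_num_def numl_def fps_X_power_nth numeral_fps_const fps_X_nth)
  next
    case False
    then show ?thesis
      by (simp add: gf_num_def fp_nth numl_def fps_X_power_nth numeral_fps_const fps_X_nth nth_default_big)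
  qed
qed

lemma Pf11: "Pf 1 1 = - gf_num"
proof -
  have "Pt 1 1 = map (\<lambda>a. -1 * a) numl" by (simp add: Pt_def Ptab_def numl_def)
  then have "Pf 1 1 = fps_const (-1) * fp numl" by (simp only: Pf_def fp_map)
  moreover have "fps_const (-1::real) = -1" by (metis fps_const_1_eq_1 fps_const_neg)
  ultimately show ?thesis by (simp add: gf_num_fp)
qed

definition A :: "real fps" where "A = Abs_fps (\<lambda>n. real (a_count n))"

lemma A_F: "A = F 1 1"
  by (simp add: A_def F_def cnt_def a_count_CS)

lemma den_A: "gf_den * A = - gf_num"
  using main_fps unfolding A_F Dn_def gf_den_fp[symmetric] Pf11 .

lemma gf_den_0: "fps_nth gf_den 0 = -1"
  by (simp add: gf_den_fp fp_nth dl_def)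

lemma A_eq: "A = - (gf_num / gf_den)"
proof -
  have nz: "fps_nth gf_den 0 \<noteq> 0" by (simp add: gf_den_0)
  have "gf_num / gf_den = gf_num * inverse gf_den" by (rule fps_divide_unit[OF nz])
  also have "\<dots> = - (gf_den * A) * inverse gf_den" by (simp add: den_A)
  also have "\<dots> = - A * (gf_den * inverse gf_den)" by (simp add: algebra_simps)
  also have "\<dots> = - A" using inverse_mult_eq_1'[OF nz] by simp
  finally show ?thesis by simp
qed

lemma A_nth: "fps_nth A n = real (a_count n)" by (simp add: A_def)

lemma numX: "fps_nth (numeral k * f :: real fps) n = numeral k * fps_nth f n"
  by (simp add: numeral_fps_const)

lemma eqK: "fps_nth (gf_den * A) n = - fps_nth gf_num n" using den_A by simp

lemmas evs = gf_den_def gf_num_def ring_distribs mult.assoc fps_X_power_mult_nth fps_X_mult_nth numX A_nth fps_X_power_nth fps_X_nth fps_numeral_nth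

definition psr :: "real list" where "psr = [-1, 0, 0, -3, -2, 2, 2, -3, 3, 0, -1, -1, 1, -2, 1, 0, 2, -3, 1]"

lemma Lop_Cons': "Lop (c#cs) a n = c * a n + Lop cs a (n + 1)" by simp

lemma recur: "Lop psr (\<lambda>m. real (a_count m)) n = 0"
proof -
  have "Lop psr (\<lambda>m. real (a_count m)) n = - fps_nth (gf_den * A) (n + 18)"
    by (simp only: psr_def Lop_Cons' Lop.simps(1)) (simp add: evs, simp add: numeral_eq_Suc)
  then show ?thesis using eqK[of "n+18"] by (simp add: gf_num_def fps_X_power_nth fps_X_nth numX fps_numeral_nth)
qed

lemma v0: "real (a_count 0) = 1" using eqK[of 0]  by (simp add: evs)
lemma v1: "real (a_count 1) = 1" using eqK[of 1] v0 by (simp add: evs)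
lemma v2: "real (a_count 2) = 2" using eqK[of 2] v0 v1 by (simp add: evs)
lemma v3: "real (a_count 3) = 4" using eqK[of 3] v0 v1 v2 by (simp add: evs)
lemma v4: "real (a_count 4) = 8" using eqK[of 4] v0 v1 v2 v3 by (simp add: evs)
lemma v5: "real (a_count 5) = 16" using eqK[of 5] v0 v1 v2 v3 v4 by (simp add: evs)
lemma v6: "real (a_count 6) = 32" using eqK[of 6] v0 v1 v2 v3 v4 v5 by (simp add: evs)
lemma v7: "real (a_count 7) = 64" using eqK[of 7] v0 v1 v2 v3 v4 v5 v6 by (simp add: evs)
lemma v8: "real (a_count 8) = 128" using eqK[of 8] v0 v1 v2 v3 v4 v5 v6 v7 by (simp add: evs)
lemma v9: "real (a_count 9) = 255" using eqK[of 9] v0 v1 v2 v3 v4 v5 v6 v7 v8 by (simp add: evs)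
lemma v10: "real (a_count 10) = 505" using eqK[of 10] v0 v1 v2 v3 v4 v5 v6 v7 v8 v9 by (simp add: evs)
lemma v11: "real (a_count 11) = 998" using eqK[of 11] v0 v1 v2 v3 v4 v5 v6 v7 v8 v9 v10 by (simp add: evs)
lemma v12: "real (a_count 12) = 1971" using eqK[of 12] v0 v1 v2 v3 v4 v5 v6 v7 v8 v9 v10 v11 by (simp add: evs)
lemma v13: "real (a_count 13) = 3893" using eqK[of 13] v0 v1 v2 v3 v4 v5 v6 v7 v8 v9 v10 v11 v12 by (simp add: evs)
lemma v14: "real (a_count 14) = 7697" using eqK[of 14] v0 v1 v2 v3 v4 v5 v6 v7 v8 v9 v10 v11 v12 v13 by (simp add: evs)
lemma v15: "real (a_count 15) = 15223" using eqK[of 15] v0 v1 v2 v3 v4 v5 v6 v7 v8 v9 v10 v11 v12 v13 v14 by (simp add: evs)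
lemma v16: "real (a_count 16) = 30113" using eqK[of 16] v0 v1 v2 v3 v4 v5 v6 v7 v8 v9 v10 v11 v12 v13 v14 v15 by (simp add: evs)
lemma v17: "real (a_count 17) = 59575" using eqK[of 17] v0 v1 v2 v3 v4 v5 v6 v7 v8 v9 v10 v11 v12 v13 v14 v15 v16 by (simp add: evs)
lemma v18: "real (a_count 18) = 117861" using eqK[of 18] v0 v1 v2 v3 v4 v5 v6 v7 v8 v9 v10 v11 v12 v13 v14 v15 v16 v17 by (simp add: evs)
lemma v19: "real (a_count 19) = 233164" using eqK[of 19] v1 v2 v3 v4 v5 v6 v7 v8 v9 v10 v11 v12 v13 v14 v15 v16 v17 v18 by (simp add: evs)
lemma v20: "real (a_count 20) = 461250" using eqK[of 20] v2 v3 v4 v5 v6 v7 v8 v9 v10 v11 v12 v13 v14 v15 v16 v17 v18 v19 by (simp add: evs)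
lemma v21: "real (a_count 21) = 912423" using eqK[of 21] v3 v4 v5 v6 v7 v8 v9 v10 v11 v12 v13 v14 v15 v16 v17 v18 v19 v20 by (simp add: evs)
lemma v22: "real (a_count 22) = 1804882" using eqK[of 22] v4 v5 v6 v7 v8 v9 v10 v11 v12 v13 v14 v15 v16 v17 v18 v19 v20 v21 by (simp add: evs)
lemma v23: "real (a_count 23) = 3570257" using eqK[of 23] v5 v6 v7 v8 v9 v10 v11 v12 v13 v14 v15 v16 v17 v18 v19 v20 v21 v22 by (simp add: evs)
lemma v24: "real (a_count 24) = 7062369" using eqK[of 24] v6 v7 v8 v9 v10 v11 v12 v13 v14 v15 v16 v17 v18 v19 v20 v21 v22 v23 by (simp add: evs)
lemma v25: "real (a_count 25) = 13970211" using eqK[of 25] v7 v8 v9 v10 v11 v12 v13 v14 v15 v16 v17 v18 v19 v20 v21 v22 v23 v24 by (simp add: evs)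
lemma v26: "real (a_count 26) = 27634848" using eqK[of 26] v8 v9 v10 v11 v12 v13 v14 v15 v16 v17 v18 v19 v20 v21 v22 v23 v24 v25 by (simp add: evs)
lemma v27: "real (a_count 27) = 54665348" using eqK[of 27] v9 v10 v11 v12 v13 v14 v15 v16 v17 v18 v19 v20 v21 v22 v23 v24 v25 v26 by (simp add: evs)
lemma v28: "real (a_count 28) = 108135332" using eqK[of 28] v10 v11 v12 v13 v14 v15 v16 v17 v18 v19 v20 v21 v22 v23 v24 v25 v26 v27 by (simp add: evs)
lemma v29: "real (a_count 29) = 213906125" using eqK[of 29] v11 v12 v13 v14 v15 v16 v17 v18 v19 v20 v21 v22 v23 v24 v25 v26 v27 v28 by (simp add: evs)
lemma v30: "real (a_count 30) = 423134791" using eqK[of 30] v12 v13 v14 v15 v16 v17 v18 v19 v20 v21 v22 v23 v24 v25 v26 v27 v28 v29 by (simp add: evs)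

lemma vals: "map a_count [0..<31] = [1, 1, 2, 4, 8, 16, 32, 64, 128, 255, 505, 998, 1971, 3893, 7697, 15223, 30113, 59575, 117861, 233164, 461250, 912423, 1804882, 3570257, 7062369, 13970211, 27634848, 54665348, 108135332, 213906125, 423134791]"
proof -
  have n0: "a_count 0 = 1" using v0 by simp
  have n1: "a_count 1 = 1" using v1 by simp
  have n2: "a_count 2 = 2" using v2 by simp
  have n3: "a_count 3 = 4" using v3 by simp
  have n4: "a_count 4 = 8" using v4 by simp
  have n5: "a_count 5 = 16" using v5 by simp
  have n6: "a_count 6 = 32" using v6 by simp
  have n7: "a_count 7 = 64" using v7 by simp
  have n8: "a_count 8 = 128" using v8 by simp
  have n9: "a_count 9 = 255" using v9 by simp
  have n10: "a_count 10 = 505" using v10 by simp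
  have n11: "a_count 11 = 998" using v11 by simp
  have n12: "a_count 12 = 1971" using v12 by simp
  have n13: "a_count 13 = 3893" using v13 by simp
  have n14: "a_count 14 = 7697" using v14 by simp
  have n15: "a_count 15 = 15223" using v15 by simp
  have n16: "a_count 16 = 30113" using v16 by simp
  have n17: "a_count 17 = 59575" using v17 by simp
  have n18: "a_count 18 = 117861" using v18 by simp
  have n19: "a_count 19 = 233164" using v19 by simp
  have n20: "a_count 20 = 461250" using v20 by simp
  have n21: "a_count 21 = 912423" using v21 by simp
  have n22: "a_count 22 = 1804882" using v22 by simp
  have n23: "a_count 23 = 3570257" using v23 by simp
  have n24: "a_count 24 = 7062369" using v24 by simp
  have n25: "a_count 25 = 13970211" using v25 by simp
  have n26: "a_count 26 = 27634848" using v26 by simp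
  have n27: "a_count 27 = 54665348" using v27 by simp
  have n28: "a_count 28 = 108135332" using v28 by simp
  have n29: "a_count 29 = 213906125" using v29 by simp
  have n30: "a_count 30 = 423134791" using v30 by simp
  have u: "[0..<31] = [0, 1, 2, 3, 4, 5, 6, 7, 8, 9, 10, 11, 12, 13, 14, 15, 16, 17, 18, 19, 20, 21, 22, 23, 24, 25, 26, 27, 28, 29, 30]" by code_simp
  show ?thesis unfolding u by (simp only: list.map n0 n1 n2 n3 n4 n5 n6 n7 n8 n9 n10 n11 n12 n13 n14 n15 n16 n17 n18 n19 n20 n21 n22 n23 n24 n25 n26 n27 n28 n29 n30)
qed

fun dL :: "real list \<Rightarrow> real list" where
  "dL [] = []"
| "dL (c#cs) = padd cs (0 # dL cs)"

lemma pv_sd_dL: "pv (sd p r) r = pv (dL p) r"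
  by (induction p r rule: sd.induct) (simp_all add: pv_padd pv_Cons algebra_simps)

fun W :: "real list \<Rightarrow> real list \<Rightarrow> real list" where
  "W (c#d#cs) (v#vs) = padd (map (\<lambda>x. v * x) (d#cs)) (W (d#cs) vs)"
| "W _ _ = []"

lemma Lop_sd_W:
  "length p \<le> length vs \<Longrightarrow> (\<forall>i<length vs. vs!i = a (n+i)) \<Longrightarrow> Lop (sd p r) a n = pv (W p vs) r"
proof (induction p r arbitrary: n vs rule: sd.induct)
  case (3 c d cs r n vs)
  then obtain v vs' where vs: "vs = v # vs'" by (cases vs) auto
  have v: "v = a n" using 3(3) vs by (metis add_0_right length_Cons nth_Cons_0 zero_less_Suc)
  have h: "\<forall>i<length vs'. vs'!i = a (Suc n + i)"
  proof (intro allI impI)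
    fix i assume "i < length vs'"
    then have "vs!(Suc i) = a (n + Suc i)" using 3(3) vs by auto
    then show "vs'!i = a (Suc n + i)" using vs by simp
  qed
  have IH: "Lop (sd (d#cs) r) a (Suc n) = pv (W (d#cs) vs') r"
    using 3(1)[OF _ h] 3(2) vs by simp
  have m: "pv (map (\<lambda>x. v * x) (d#cs)) r = v * pv (d#cs) r" by (rule pv_map_mult)
  have "Lop (sd (c#d#cs) r) a n = pv (d#cs) r * a n + Lop (sd (d#cs) r) a (Suc n)" by simp
  also have "\<dots> = v * pv (d#cs) r + pv (W (d#cs) vs') r" using IH v by simp
  also have "\<dots> = pv (W (c#d#cs) vs) r" using vs by (simp only: W.simps pv_padd m)
  finally show ?case .
qed simp_all

lemma isCont_pv: "isCont (\<lambda>x. pv cs x) x"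
  by (induction cs) (auto simp: pv_Cons intro!: continuous_intros)

lemma psr_int: "psr = map real_of_int [-1, 0, 0, -3, -2, 2, 2, -3, 3, 0, -1, -1, 1, -2, 1, 0, 2, -3, 1]" by (simp add: psr_def)

lemma ck_p0: "0 < loh (posl [1, 0, 0, 3, 2, -2, -2, 3, -3, 0, 1, 1, -1, 2, -1, 0, -2, 3, -1]) 19781317474115406 10000000000000000 100000000000000000000 - uph (negl [1, 0, 0, 3, 2, -2, -2, 3, -3, 0, 1, 1, -1, 2, -1, 0, -2, 3, -1]) 19781317474115406 10000000000000000 100000000000000000000" by code_simp
lemma ck_p1: "0 < loh (posl [-1, 0, 0, -3, -2, 2, 2, -3, 3, 0, -1, -1, 1, -2, 1, 0, 2, -3, 1]) 19781317474115407 10000000000000000 100000000000000000000 - uph (negl [-1, 0, 0, -3, -2, 2, 2, -3, 3, 0, -1, -1, 1, -2, 1, 0, 2, -3, 1]) 19781317474115407 10000000000000000 100000000000000000000" by code_simp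
lemma ck_d: "0 < loh (posl [0, 0, -9, -8, 10, 12, -21, 24, 0, -10, -11, 12, -26, 14, 0, 32, -51, 18, 0]) 19781317474115406 10000000000000000 100000000000000000000 - uph (negl [0, 0, -9, -8, 10, 12, -21, 24, 0, -10, -11, 12, -26, 14, 0, 32, -51, 18, 0]) 19781317474115407 10000000000000000 100000000000000000000" by code_simp
lemma ck_c1: "0 < loh (posl [100000000000, 0, 493247621421, 738442330152, -448052912690, -657663495228, 850911116649, -1215326990456, 0, 548052912690, 602858203959, -557663495228, 1324937572994, -667274077766, 0, -1653769320608, 2595069854719, -886495242842, 0]) 19781317474115406 10000000000000000 100000000000000000000 - uph (negl [100000000000, 0, 493247621421, 738442330152, -448052912690, -657663495228, 850911116649, -1215326990456, 0, 548052912690, 602858203959, -557663495228, 1324937572994, -667274077766, 0, -1653769320608, 2595069854719, -886495242842, 0]) 19781317474115407 10000000000000000 100000000000000000000" by code_simp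
lemma ck_c2: "0 < loh (posl [-100000000000, 0, -493247621430, -738442330160, 448052912700, 657663495240, -850911116670, 1215326990480, 0, -548052912700, -602858203970, 557663495240, -1324937573020, 667274077780, 0, 1653769320640, -2595069854770, 886495242860, 0]) 19781317474115406 10000000000000000 100000000000000000000 - uph (negl [-100000000000, 0, -493247621430, -738442330160, 448052912700, 657663495240, -850911116670, 1215326990480, 0, -548052912700, -602858203970, 557663495240, -1324937573020, 667274077780, 0, 1653769320640, -2595069854770, 886495242860, 0]) 19781317474115407 10000000000000000 100000000000000000000" by code_simp

definition r0 :: real where "r0 = real_of_int 19781317474115406 / real_of_int 10000000000000000"
definition r1 :: real where "r1 = real_of_int 19781317474115407 / real_of_int 10000000000000000"

lemma root_exists: "\<exists>r. r0 \<le> r \<and> r \<le> r1 \<and> pv psr r = 0"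
proof -
  have a: "0 < pv (map real_of_int [1, 0, 0, 3, 2, -2, -2, 3, -3, 0, 1, 1, -1, 2, -1, 0, -2, 3, -1]) r0"
    unfolding r0_def by (rule chk_pos[OF _ _ _ order_refl order_refl ck_p0]) simp_all
  have b: "0 < pv (map real_of_int [-1, 0, 0, -3, -2, 2, 2, -3, 3, 0, -1, -1, 1, -2, 1, 0, 2, -3, 1]) r1"
    unfolding r1_def by (rule chk_pos[OF _ _ _ order_refl order_refl ck_p1]) simp_all
  have e: "map real_of_int [1, 0, 0, 3, 2, -2, -2, 3, -3, 0, 1, 1, -1, 2, -1, 0, -2, 3, -1] = map (\<lambda>c. -1 * c) psr" by (simp add: psr_def)
  have a': "pv psr r0 < 0" using a unfolding e pv_map_mult by simp
  have b': "0 < pv psr r1" using b unfolding psr_int .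
  have "r0 \<le> r1" by (simp add: r0_def r1_def)
  then have "\<exists>x\<ge>r0. x \<le> r1 \<and> pv psr x = 0"
    by (intro IVT') (use a' b' in \<open>auto intro!: continuous_at_imp_continuous_on isCont_pv\<close>)
  then show ?thesis by blast
qed

lemma ckb0_1: "100 * (uph (posl [0, 0, -3, -2, 2, 2, -3, 3, 0, -1, -1, 1, -2, 1, 0, 2, -3, 1]) 197814 100000 100000 - loh (negl [0, 0, -3, -2, 2, 2, -3, 3, 0, -1, -1, 1, -2, 1, 0, 2, -3, 1]) 197813 100000 100000) \<le> 1615 * 100000" by code_simp
lemma ckb0_2: "- (1615 * 100000) \<le> 100 * (loh (posl [0, 0, -3, -2, 2, 2, -3, 3, 0, -1, -1, 1, -2, 1, 0, 2, -3, 1]) 197813 100000 100000 - uph (negl [0, 0, -3, -2, 2, 2, -3, 3, 0, -1, -1, 1, -2, 1, 0, 2, -3, 1]) 197814 100000 100000)" by code_simp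
lemma ckb1_1: "100 * (uph (posl [0, -3, -2, 2, 2, -3, 3, 0, -1, -1, 1, -2, 1, 0, 2, -3, 1]) 197814 100000 100000 - loh (negl [0, -3, -2, 2, 2, -3, 3, 0, -1, -1, 1, -2, 1, 0, 2, -3, 1]) 197813 100000 100000) \<le> 772 * 100000" by code_simp
lemma ckb1_2: "- (772 * 100000) \<le> 100 * (loh (posl [0, -3, -2, 2, 2, -3, 3, 0, -1, -1, 1, -2, 1, 0, 2, -3, 1]) 197813 100000 100000 - uph (negl [0, -3, -2, 2, 2, -3, 3, 0, -1, -1, 1, -2, 1, 0, 2, -3, 1]) 197814 100000 100000)" by code_simp
lemma ckb2_1: "100 * (uph (posl [-3, -2, 2, 2, -3, 3, 0, -1, -1, 1, -2, 1, 0, 2, -3, 1]) 197814 100000 100000 - loh (negl [-3, -2, 2, 2, -3, 3, 0, -1, -1, 1, -2, 1, 0, 2, -3, 1]) 197813 100000 100000) \<le> 368 * 100000" by code_simp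
lemma ckb2_2: "- (368 * 100000) \<le> 100 * (loh (posl [-3, -2, 2, 2, -3, 3, 0, -1, -1, 1, -2, 1, 0, 2, -3, 1]) 197813 100000 100000 - uph (negl [-3, -2, 2, 2, -3, 3, 0, -1, -1, 1, -2, 1, 0, 2, -3, 1]) 197814 100000 100000)" by code_simp
lemma ckb3_1: "100 * (uph (posl [-2, 2, 2, -3, 3, 0, -1, -1, 1, -2, 1, 0, 2, -3, 1]) 197814 100000 100000 - loh (negl [-2, 2, 2, -3, 3, 0, -1, -1, 1, -2, 1, 0, 2, -3, 1]) 197813 100000 100000) \<le> 327 * 100000" by code_simp
lemma ckb3_2: "- (327 * 100000) \<le> 100 * (loh (posl [-2, 2, 2, -3, 3, 0, -1, -1, 1, -2, 1, 0, 2, -3, 1]) 197813 100000 100000 - uph (negl [-2, 2, 2, -3, 3, 0, -1, -1, 1, -2, 1, 0, 2, -3, 1]) 197814 100000 100000)" by code_simp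
lemma ckb4_1: "100 * (uph (posl [2, 2, -3, 3, 0, -1, -1, 1, -2, 1, 0, 2, -3, 1]) 197814 100000 100000 - loh (negl [2, 2, -3, 3, 0, -1, -1, 1, -2, 1, 0, 2, -3, 1]) 197813 100000 100000) \<le> 261 * 100000" by code_simp
lemma ckb4_2: "- (261 * 100000) \<le> 100 * (loh (posl [2, 2, -3, 3, 0, -1, -1, 1, -2, 1, 0, 2, -3, 1]) 197813 100000 100000 - uph (negl [2, 2, -3, 3, 0, -1, -1, 1, -2, 1, 0, 2, -3, 1]) 197814 100000 100000)" by code_simp
lemma ckb5_1: "100 * (uph (posl [2, -3, 3, 0, -1, -1, 1, -2, 1, 0, 2, -3, 1]) 197814 100000 100000 - loh (negl [2, -3, 3, 0, -1, -1, 1, -2, 1, 0, 2, -3, 1]) 197813 100000 100000) \<le> 47 * 100000" by code_simp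
lemma ckb5_2: "- (47 * 100000) \<le> 100 * (loh (posl [2, -3, 3, 0, -1, -1, 1, -2, 1, 0, 2, -3, 1]) 197813 100000 100000 - uph (negl [2, -3, 3, 0, -1, -1, 1, -2, 1, 0, 2, -3, 1]) 197814 100000 100000)" by code_simp
lemma ckb6_1: "100 * (uph (posl [-3, 3, 0, -1, -1, 1, -2, 1, 0, 2, -3, 1]) 197814 100000 100000 - loh (negl [-3, 3, 0, -1, -1, 1, -2, 1, 0, 2, -3, 1]) 197813 100000 100000) \<le> 124 * 100000" by code_simp
lemma ckb6_2: "- (124 * 100000) \<le> 100 * (loh (posl [-3, 3, 0, -1, -1, 1, -2, 1, 0, 2, -3, 1]) 197813 100000 100000 - uph (negl [-3, 3, 0, -1, -1, 1, -2, 1, 0, 2, -3, 1]) 197814 100000 100000)" by code_simp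
lemma ckb7_1: "100 * (uph (posl [3, 0, -1, -1, 1, -2, 1, 0, 2, -3, 1]) 197814 100000 100000 - loh (negl [3, 0, -1, -1, 1, -2, 1, 0, 2, -3, 1]) 197813 100000 100000) \<le> 107 * 100000" by code_simp
lemma ckb7_2: "- (107 * 100000) \<le> 100 * (loh (posl [3, 0, -1, -1, 1, -2, 1, 0, 2, -3, 1]) 197813 100000 100000 - uph (negl [3, 0, -1, -1, 1, -2, 1, 0, 2, -3, 1]) 197814 100000 100000)" by code_simp
lemma ckb8_1: "100 * (uph (posl [0, -1, -1, 1, -2, 1, 0, 2, -3, 1]) 197814 100000 100000 - loh (negl [0, -1, -1, 1, -2, 1, 0, 2, -3, 1]) 197813 100000 100000) \<le> 106 * 100000" by code_simp
lemma ckb8_2: "- (106 * 100000) \<le> 100 * (loh (posl [0, -1, -1, 1, -2, 1, 0, 2, -3, 1]) 197813 100000 100000 - uph (negl [0, -1, -1, 1, -2, 1, 0, 2, -3, 1]) 197814 100000 100000)" by code_simp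
lemma ckb9_1: "100 * (uph (posl [-1, -1, 1, -2, 1, 0, 2, -3, 1]) 197814 100000 100000 - loh (negl [-1, -1, 1, -2, 1, 0, 2, -3, 1]) 197813 100000 100000) \<le> 54 * 100000" by code_simp
lemma ckb9_2: "- (54 * 100000) \<le> 100 * (loh (posl [-1, -1, 1, -2, 1, 0, 2, -3, 1]) 197813 100000 100000 - uph (negl [-1, -1, 1, -2, 1, 0, 2, -3, 1]) 197814 100000 100000)" by code_simp
lemma ckb10_1: "100 * (uph (posl [-1, 1, -2, 1, 0, 2, -3, 1]) 197814 100000 100000 - loh (negl [-1, 1, -2, 1, 0, 2, -3, 1]) 197813 100000 100000) \<le> 26 * 100000" by code_simp
lemma ckb10_2: "- (26 * 100000) \<le> 100 * (loh (posl [-1, 1, -2, 1, 0, 2, -3, 1]) 197813 100000 100000 - uph (negl [-1, 1, -2, 1, 0, 2, -3, 1]) 197814 100000 100000)" by code_simp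
lemma ckb11_1: "100 * (uph (posl [1, -2, 1, 0, 2, -3, 1]) 197814 100000 100000 - loh (negl [1, -2, 1, 0, 2, -3, 1]) 197813 100000 100000) \<le> 64 * 100000" by code_simp
lemma ckb11_2: "- (64 * 100000) \<le> 100 * (loh (posl [1, -2, 1, 0, 2, -3, 1]) 197813 100000 100000 - uph (negl [1, -2, 1, 0, 2, -3, 1]) 197814 100000 100000)" by code_simp
lemma ckb12_1: "100 * (uph (posl [-2, 1, 0, 2, -3, 1]) 197814 100000 100000 - loh (negl [-2, 1, 0, 2, -3, 1]) 197813 100000 100000) \<le> 19 * 100000" by code_simp
lemma ckb12_2: "- (19 * 100000) \<le> 100 * (loh (posl [-2, 1, 0, 2, -3, 1]) 197813 100000 100000 - uph (negl [-2, 1, 0, 2, -3, 1]) 197814 100000 100000)" by code_simp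
lemma ckb13_1: "100 * (uph (posl [1, 0, 2, -3, 1]) 197814 100000 100000 - loh (negl [1, 0, 2, -3, 1]) 197813 100000 100000) \<le> 92 * 100000" by code_simp
lemma ckb13_2: "- (92 * 100000) \<le> 100 * (loh (posl [1, 0, 2, -3, 1]) 197813 100000 100000 - uph (negl [1, 0, 2, -3, 1]) 197814 100000 100000)" by code_simp
lemma ckb14_1: "100 * (uph (posl [0, 2, -3, 1]) 197814 100000 100000 - loh (negl [0, 2, -3, 1]) 197813 100000 100000) \<le> 5 * 100000" by code_simp
lemma ckb14_2: "- (5 * 100000) \<le> 100 * (loh (posl [0, 2, -3, 1]) 197813 100000 100000 - uph (negl [0, 2, -3, 1]) 197814 100000 100000)" by code_simp
lemma ckb15_1: "100 * (uph (posl [2, -3, 1]) 197814 100000 100000 - loh (negl [2, -3, 1]) 197813 100000 100000) \<le> 3 * 100000" by code_simp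
lemma ckb15_2: "- (3 * 100000) \<le> 100 * (loh (posl [2, -3, 1]) 197813 100000 100000 - uph (negl [2, -3, 1]) 197814 100000 100000)" by code_simp
lemma ckb16_1: "100 * (uph (posl [-3, 1]) 197814 100000 100000 - loh (negl [-3, 1]) 197813 100000 100000) \<le> 103 * 100000" by code_simp
lemma ckb16_2: "- (103 * 100000) \<le> 100 * (loh (posl [-3, 1]) 197813 100000 100000 - uph (negl [-3, 1]) 197814 100000 100000)" by code_simp

lemma cb_num: "pv [1615 / 100, 772 / 100, 368 / 100, 327 / 100, 261 / 100, 47 / 100, 124 / 100, 107 / 100, 106 / 100, 54 / 100, 26 / 100, 64 / 100, 19 / 100, 92 / 100, 5 / 100, 3 / 100, 103 / 100] (7/4) \<le> (7/4) ^ 17" by (simp add: pv_Cons power_divide)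

lemma vl: "map (\<lambda>m. real (a_count m)) [0..<19] = [1, 1, 2, 4, 8, 16, 32, 64, 128, 255, 505, 998, 1971, 3893, 7697, 15223, 30113, 59575, 117861]"
proof -
  have u: "[0..<19] = [0, 1, 2, 3, 4, 5, 6, 7, 8, 9, 10, 11, 12, 13, 14, 15, 16, 17, 18]" by code_simp
  have v1': "real (a_count (Suc 0)) = 1" using v1 by simp
  show ?thesis unfolding u by (simp add: v1' v0 v1 v2 v3 v4 v5 v6 v7 v8 v9 v10 v11 v12 v13 v14 v15 v16 v17 v18)
qed

lemma main_asym: "\<exists>r c :: real.
         1.9781317474 \<le> r \<and> r < 1.9781317475
       \<and> 0.54805291269 \<le> c \<and> c < 0.54805291270
       \<and> (\<lambda>n. real (a_count (Suc n)) / real (a_count n)) \<longlonglongrightarrow> r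
       \<and> (\<lambda>n. real (a_count n)) \<sim>[at_top] (\<lambda>n. c * r ^ n)"
proof -
  obtain r where r: "r0 \<le> r" "r \<le> r1" "pv psr r = 0" using root_exists by blast
  have rr: "real_of_int 19781317474115406 / real_of_int 10000000000000000 \<le> r" "r \<le> real_of_int 19781317474115407 / real_of_int 10000000000000000"
    using r by (simp_all add: r0_def r1_def)
  have rb: "real_of_int 197813 / real_of_int 100000 \<le> r" "r \<le> real_of_int 197814 / real_of_int 100000"
    using r unfolding r0_def r1_def by simp_all
  have rpos: "0 < r" using rb by simp
  define a where "a m = real (a_count m)" for m
  have recz: "Lop psr a n = 0" for n unfolding a_def by (rule recur)
  have dpos: "0 < pv (map real_of_int [0, 0, -9, -8, 10, 12, -21, 24, 0, -10, -11, 12, -26, 14, 0, 32, -51, 18, 0]) r"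
    by (rule chk_pos[OF _ _ _ rr ck_d]) simp_all
  have de: "map real_of_int [0, 0, -9, -8, 10, 12, -21, 24, 0, -10, -11, 12, -26, 14, 0, 32, -51, 18, 0] = dL psr" by (simp add: psr_def)
  have S0: "0 < pv (sd psr r) r" using dpos unfolding de pv_sd_dL .
  have split: "sd psr r = [pv [0, 0, -3, -2, 2, 2, -3, 3, 0, -1, -1, 1, -2, 1, 0, 2, -3, 1] r, pv [0, -3, -2, 2, 2, -3, 3, 0, -1, -1, 1, -2, 1, 0, 2, -3, 1] r, pv [-3, -2, 2, 2, -3, 3, 0, -1, -1, 1, -2, 1, 0, 2, -3, 1] r, pv [-2, 2, 2, -3, 3, 0, -1, -1, 1, -2, 1, 0, 2, -3, 1] r, pv [2, 2, -3, 3, 0, -1, -1, 1, -2, 1, 0, 2, -3, 1] r, pv [2, -3, 3, 0, -1, -1, 1, -2, 1, 0, 2, -3, 1] r, pv [-3, 3, 0, -1, -1, 1, -2, 1, 0, 2, -3, 1] r, pv [3, 0, -1, -1, 1, -2, 1, 0, 2, -3, 1] r, pv [0, -1, -1, 1, -2, 1, 0, 2, -3, 1] r, pv [-1, -1, 1, -2, 1, 0, 2, -3, 1] r, pv [-1, 1, -2, 1, 0, 2, -3, 1] r, pv [1, -2, 1, 0, 2, -3, 1] r, pv [-2, 1, 0, 2, -3, 1] r, pv [1, 0, 2, -3, 1] r, pv [0, 2, -3, 1] r, pv [2, -3, 1] r, pv [-3, 1] r] @ [1]" by (simp add: psr_def)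
  have b0: "\<bar>pv (map real_of_int [0, 0, -3, -2, 2, 2, -3, 3, 0, -1, -1, 1, -2, 1, 0, 2, -3, 1]) r\<bar> \<le> real_of_int 1615 / real_of_int 100"
    by (rule chk_abs[OF _ _ _ rb _ ckb0_1 ckb0_2]) simp_all
  have b1: "\<bar>pv (map real_of_int [0, -3, -2, 2, 2, -3, 3, 0, -1, -1, 1, -2, 1, 0, 2, -3, 1]) r\<bar> \<le> real_of_int 772 / real_of_int 100"
    by (rule chk_abs[OF _ _ _ rb _ ckb1_1 ckb1_2]) simp_all
  have b2: "\<bar>pv (map real_of_int [-3, -2, 2, 2, -3, 3, 0, -1, -1, 1, -2, 1, 0, 2, -3, 1]) r\<bar> \<le> real_of_int 368 / real_of_int 100"
    by (rule chk_abs[OF _ _ _ rb _ ckb2_1 ckb2_2]) simp_all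
  have b3: "\<bar>pv (map real_of_int [-2, 2, 2, -3, 3, 0, -1, -1, 1, -2, 1, 0, 2, -3, 1]) r\<bar> \<le> real_of_int 327 / real_of_int 100"
    by (rule chk_abs[OF _ _ _ rb _ ckb3_1 ckb3_2]) simp_all
  have b4: "\<bar>pv (map real_of_int [2, 2, -3, 3, 0, -1, -1, 1, -2, 1, 0, 2, -3, 1]) r\<bar> \<le> real_of_int 261 / real_of_int 100"
    by (rule chk_abs[OF _ _ _ rb _ ckb4_1 ckb4_2]) simp_all
  have b5: "\<bar>pv (map real_of_int [2, -3, 3, 0, -1, -1, 1, -2, 1, 0, 2, -3, 1]) r\<bar> \<le> real_of_int 47 / real_of_int 100"
    by (rule chk_abs[OF _ _ _ rb _ ckb5_1 ckb5_2]) simp_all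
  have b6: "\<bar>pv (map real_of_int [-3, 3, 0, -1, -1, 1, -2, 1, 0, 2, -3, 1]) r\<bar> \<le> real_of_int 124 / real_of_int 100"
    by (rule chk_abs[OF _ _ _ rb _ ckb6_1 ckb6_2]) simp_all
  have b7: "\<bar>pv (map real_of_int [3, 0, -1, -1, 1, -2, 1, 0, 2, -3, 1]) r\<bar> \<le> real_of_int 107 / real_of_int 100"
    by (rule chk_abs[OF _ _ _ rb _ ckb7_1 ckb7_2]) simp_all
  have b8: "\<bar>pv (map real_of_int [0, -1, -1, 1, -2, 1, 0, 2, -3, 1]) r\<bar> \<le> real_of_int 106 / real_of_int 100"
    by (rule chk_abs[OF _ _ _ rb _ ckb8_1 ckb8_2]) simp_all
  have b9: "\<bar>pv (map real_of_int [-1, -1, 1, -2, 1, 0, 2, -3, 1]) r\<bar> \<le> real_of_int 54 / real_of_int 100"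
    by (rule chk_abs[OF _ _ _ rb _ ckb9_1 ckb9_2]) simp_all
  have b10: "\<bar>pv (map real_of_int [-1, 1, -2, 1, 0, 2, -3, 1]) r\<bar> \<le> real_of_int 26 / real_of_int 100"
    by (rule chk_abs[OF _ _ _ rb _ ckb10_1 ckb10_2]) simp_all
  have b11: "\<bar>pv (map real_of_int [1, -2, 1, 0, 2, -3, 1]) r\<bar> \<le> real_of_int 64 / real_of_int 100"
    by (rule chk_abs[OF _ _ _ rb _ ckb11_1 ckb11_2]) simp_all
  have b12: "\<bar>pv (map real_of_int [-2, 1, 0, 2, -3, 1]) r\<bar> \<le> real_of_int 19 / real_of_int 100"
    by (rule chk_abs[OF _ _ _ rb _ ckb12_1 ckb12_2]) simp_all
  have b13: "\<bar>pv (map real_of_int [1, 0, 2, -3, 1]) r\<bar> \<le> real_of_int 92 / real_of_int 100"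
    by (rule chk_abs[OF _ _ _ rb _ ckb13_1 ckb13_2]) simp_all
  have b14: "\<bar>pv (map real_of_int [0, 2, -3, 1]) r\<bar> \<le> real_of_int 5 / real_of_int 100"
    by (rule chk_abs[OF _ _ _ rb _ ckb14_1 ckb14_2]) simp_all
  have b15: "\<bar>pv (map real_of_int [2, -3, 1]) r\<bar> \<le> real_of_int 3 / real_of_int 100"
    by (rule chk_abs[OF _ _ _ rb _ ckb15_1 ckb15_2]) simp_all
  have b16: "\<bar>pv (map real_of_int [-3, 1]) r\<bar> \<le> real_of_int 103 / real_of_int 100"
    by (rule chk_abs[OF _ _ _ rb _ ckb16_1 ckb16_2]) simp_all
  have la: "list_all2 (\<lambda>x b. \<bar>x\<bar> \<le> b) [pv [0, 0, -3, -2, 2, 2, -3, 3, 0, -1, -1, 1, -2, 1, 0, 2, -3, 1] r, pv [0, -3, -2, 2, 2, -3, 3, 0, -1, -1, 1, -2, 1, 0, 2, -3, 1] r, pv [-3, -2, 2, 2, -3, 3, 0, -1, -1, 1, -2, 1, 0, 2, -3, 1] r, pv [-2, 2, 2, -3, 3, 0, -1, -1, 1, -2, 1, 0, 2, -3, 1] r, pv [2, 2, -3, 3, 0, -1, -1, 1, -2, 1, 0, 2, -3, 1] r, pv [2, -3, 3, 0, -1, -1, 1, -2, 1, 0, 2, -3, 1] r, pv [-3, 3, 0, -1, -1, 1, -2, 1, 0, 2, -3, 1] r, pv [3, 0, -1, -1, 1, -2, 1, 0, 2, -3, 1] r, pv [0, -1, -1, 1, -2, 1, 0, 2, -3, 1]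 r, pv [-1, -1, 1, -2, 1, 0, 2, -3, 1] r, pv [-1, 1, -2, 1, 0, 2, -3, 1] r, pv [1, -2, 1, 0, 2, -3, 1] r, pv [-2, 1, 0, 2, -3, 1] r, pv [1, 0, 2, -3, 1] r, pv [0, 2, -3, 1] r, pv [2, -3, 1] r, pv [-3, 1] r] [1615 / 100, 772 / 100, 368 / 100, 327 / 100, 261 / 100, 47 / 100, 124 / 100, 107 / 100, 106 / 100, 54 / 100, 26 / 100, 64 / 100, 19 / 100, 92 / 100, 5 / 100, 3 / 100, 103 / 100]"
    using b0 b1 b2 b3 b4 b5 b6 b7 b8 b9 b10 b11 b12 b13 b14 b15 b16 by simp
  have cb: "pv (map abs [pv [0, 0, -3, -2, 2, 2, -3, 3, 0, -1, -1, 1, -2, 1, 0, 2, -3, 1] r, pv [0, -3, -2, 2, 2, -3, 3, 0, -1, -1, 1, -2, 1, 0, 2, -3, 1] r, pv [-3, -2, 2, 2, -3, 3, 0, -1, -1, 1, -2, 1, 0, 2, -3, 1] r, pv [-2, 2, 2, -3, 3, 0, -1, -1, 1, -2, 1, 0, 2, -3, 1] r, pv [2, 2, -3, 3, 0, -1, -1, 1, -2, 1, 0, 2, -3, 1] r, pv [2, -3, 3, 0, -1, -1, 1, -2, 1, 0, 2, -3, 1] r, pv [-3, 3, 0, -1, -1, 1, -2, 1, 0, 2, -3, 1] r, pv [3, 0, -1, -1, 1, -2, 1, 0, 2, -3, 1] r, pv [0, -1, -1, 1, -2, 1, 0, 2, -3, 1] r, pv [-1, -1, 1, -2, 1, 0,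 2, -3, 1] r, pv [-1, 1, -2, 1, 0, 2, -3, 1] r, pv [1, -2, 1, 0, 2, -3, 1] r, pv [-2, 1, 0, 2, -3, 1] r, pv [1, 0, 2, -3, 1] r, pv [0, 2, -3, 1] r, pv [2, -3, 1] r, pv [-3, 1] r]) (7/4) \<le> (7/4) ^ length [pv [0, 0, -3, -2, 2, 2, -3, 3, 0, -1, -1, 1, -2, 1, 0, 2, -3, 1] r, pv [0, -3, -2, 2, 2, -3, 3, 0, -1, -1, 1, -2, 1, 0, 2, -3, 1] r, pv [-3, -2, 2, 2, -3, 3, 0, -1, -1, 1, -2, 1, 0, 2, -3, 1] r, pv [-2, 2, 2, -3, 3, 0, -1, -1, 1, -2, 1, 0, 2, -3, 1] r, pv [2, 2, -3, 3, 0, -1, -1, 1, -2, 1, 0, 2, -3, 1] r, pv [2, -3, 3, 0, -1, -1, 1, -2, 1, 0, 2, -3, 1] r, pv [-3, 3, 0, -1, -1, 1, -2, 1, 0, 2, -3, 1] r, pv [3, 0, -1, -1, 1, -2, 1, 0, 2, -3, 1] r, pv [0, -1, -1, 1, -2, 1, 0, 2, -3, 1] r, pv [-1, -1, 1, -2, 1, 0, 2, -3, 1] r, pv [-1, 1, -2, 1, 0, 2, -3, 1] r, pv [1, -2, 1, 0, 2, -3, 1] r, pv [-2, 1, 0, 2, -3, 1] r, pv [1, 0, 2, -3, 1] r, pv [0, 2, -3, 1] r, pv [2, -3, 1] r, pv [-3, 1] r]"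
  proof -
    have "pv (map abs [pv [0, 0, -3, -2, 2, 2, -3, 3, 0, -1, -1, 1, -2, 1, 0, 2, -3, 1] r, pv [0, -3, -2, 2, 2, -3, 3, 0, -1, -1, 1, -2, 1, 0, 2, -3, 1] r, pv [-3, -2, 2, 2, -3, 3, 0, -1, -1, 1, -2, 1, 0, 2, -3, 1] r, pv [-2, 2, 2, -3, 3, 0, -1, -1, 1, -2, 1, 0, 2, -3, 1] r, pv [2, 2, -3, 3, 0, -1, -1, 1, -2, 1, 0, 2, -3, 1] r, pv [2, -3, 3, 0, -1, -1, 1, -2, 1, 0, 2, -3, 1] r, pv [-3, 3, 0, -1, -1, 1, -2, 1, 0, 2, -3, 1] r, pv [3, 0, -1, -1, 1, -2, 1, 0, 2, -3, 1] r, pv [0, -1, -1, 1, -2, 1, 0, 2, -3, 1] r, pv [-1, -1, 1, -2, 1, 0, 2, -3, 1] r, pv [-1, 1, -2, 1, 0, 2, -3, 1] r, pv [1, -2, 1, 0, 2, -3, 1] r, pv [-2, 1, 0, 2, -3, 1] r, pv [1, 0, 2, -3, 1] r, pv [0, 2, -3, 1] r, pv [2, -3, 1] r, pv [-3, 1] r]) (7/4) \<le> pv [1615 / 100, 772 / 100, 368 / 100, 327 / 100, 261 / 100, 47 / 100, 124 / 100, 107 / 100, 106 / 100, 54 / 100, 26 / 100, 64 / 100, 19 / 100, 92 / 100, 5 / 100, 3 / 100, 103 / 100] (7/4)" by (rule pv_mono_coeffs[OF la]) simp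
    also have "\<dots> \<le> (7/4) ^ 17" by (rule cb_num)
    also have "(7/4::real) ^ 17 = (7/4) ^ length [pv [0, 0, -3, -2, 2, 2, -3, 3, 0, -1, -1, 1, -2, 1, 0, 2, -3, 1] r, pv [0, -3, -2, 2, 2, -3, 3, 0, -1, -1, 1, -2, 1, 0, 2, -3, 1] r, pv [-3, -2, 2, 2, -3, 3, 0, -1, -1, 1, -2, 1, 0, 2, -3, 1] r, pv [-2, 2, 2, -3, 3, 0, -1, -1, 1, -2, 1, 0, 2, -3, 1] r, pv [2, 2, -3, 3, 0, -1, -1, 1, -2, 1, 0, 2, -3, 1] r, pv [2, -3, 3, 0, -1, -1, 1, -2, 1, 0, 2, -3, 1] r, pv [-3, 3, 0, -1, -1, 1, -2, 1, 0, 2, -3, 1] r, pv [3, 0, -1, -1, 1, -2, 1, 0, 2, -3, 1] r, pv [0, -1, -1, 1, -2, 1, 0, 2, -3, 1] r, pv [-1, -1, 1, -2, 1, 0, 2, -3, 1] r, pv [-1, 1, -2, 1, 0, 2, -3, 1] r, pv [1, -2, 1, 0, 2, -3, 1] r, pv [-2, 1, 0, 2, -3, 1] r, pv [1, 0, 2, -3, 1] r, pv [0, 2, -3, 1] r, pv [2, -3, 1] r, pv [-3, 1] r]" by (simp add: power_divide)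
    finally show ?thesis .
  qed
  have R: "(0::real) < 7/4" "7/4 < r" using rb by simp_all
  have lim: "(\<lambda>n. a n / r^n) \<longlonglongrightarrow> Lop (sd psr r) a 0 / pv (sd psr r) r"
    using asym_main[OF recz r(3) rpos _ split cb R] S0 by simp
  define c where "c = Lop (sd psr r) a 0 / pv (sd psr r) r"
  have Wv: "Lop (sd psr r) a 0 = pv (W psr [1, 1, 2, 4, 8, 16, 32, 64, 128, 255, 505, 998, 1971, 3893, 7697, 15223, 30113, 59575, 117861]) r"
  proof -
    have "Lop (sd psr r) a 0 = pv (W psr (map a [0..<19])) r"
      by (rule Lop_sd_W) (simp_all add: psr_def)
    then show ?thesis using vl unfolding a_def by simp
  qed
  have c1: "0 < pv (map real_of_int [100000000000, 0, 493247621421, 738442330152, -448052912690, -657663495228, 850911116649, -1215326990456, 0, 548052912690, 602858203959, -557663495228, 1324937572994, -667274077766, 0, -1653769320608, 2595069854719, -886495242842, 0]) r" by (rule chk_pos[OF _ _ _ rr ck_c1]) simp_all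
  have c2: "0 < pv (map real_of_int [-100000000000, 0, -493247621430, -738442330160, 448052912700, 657663495240, -850911116670, 1215326990480, 0, -548052912700, -602858203970, 557663495240, -1324937573020, 667274077780, 0, 1653769320640, -2595069854770, 886495242860, 0]) r" by (rule chk_pos[OF _ _ _ rr ck_c2]) simp_all
  have e1: "map real_of_int [100000000000, 0, 493247621421, 738442330152, -448052912690, -657663495228, 850911116649, -1215326990456, 0, 548052912690, 602858203959, -557663495228, 1324937572994, -667274077766, 0, -1653769320608, 2595069854719, -886495242842, 0] = padd (map (\<lambda>x. 100000000000 * x) (W psr [1, 1, 2, 4, 8, 16, 32, 64, 128, 255, 505, 998, 1971, 3893, 7697, 15223, 30113, 59575, 117861])) (map (\<lambda>x. -54805291269 * x) (dL psr))"
    by (simp add: psr_def)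
  have e2: "map real_of_int [-100000000000, 0, -493247621430, -738442330160, 448052912700, 657663495240, -850911116670, 1215326990480, 0, -548052912700, -602858203970, 557663495240, -1324937573020, 667274077780, 0, 1653769320640, -2595069854770, 886495242860, 0] = padd (map (\<lambda>x. 54805291270 * x) (dL psr)) (map (\<lambda>x. -100000000000 * x) (W psr [1, 1, 2, 4, 8, 16, 32, 64, 128, 255, 505, 998, 1971, 3893, 7697, 15223, 30113, 59575, 117861]))"
    by (simp add: psr_def)
  define U where "U = pv (W psr [1, 1, 2, 4, 8, 16, 32, 64, 128, 255, 505, 998, 1971, 3893, 7697, 15223, 30113, 59575, 117861]) r"
  define Sd where "Sd = pv (dL psr) r"
  have Sd0: "0 < Sd" using S0 unfolding Sd_def pv_sd_dL .
  have cU: "c = U / Sd" unfolding c_def U_def Sd_def Wv pv_sd_dL ..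
  have i1: "0 < 100000000000 * U - 54805291269 * Sd" using c1 unfolding e1 pv_padd pv_map_mult U_def Sd_def by simp
  have i2: "0 < 54805291270 * Sd - 100000000000 * U" using c2 unfolding e2 pv_padd pv_map_mult U_def Sd_def by simp
  have cl: "0.54805291269 \<le> c"
  proof -
    have "54805291269 * Sd \<le> 100000000000 * U" using i1 by simp
    then have "54805291269 / 100000000000 \<le> U / Sd" using Sd0 by (simp add: field_simps)
    then show ?thesis unfolding cU by simp
  qed
  have cu: "c < 0.54805291270"
  proof -
    have "100000000000 * U < 54805291270 * Sd" using i2 by simp
    then have "U / Sd < 54805291270 / 100000000000" using Sd0 by (simp add: field_simps)
    then show ?thesis unfolding cU by simp
  qed
  have cpos: "0 < c" using cl by simp
  have limc: "(\<lambda>n. a n / r^n) \<longlonglongrightarrow> c" using lim unfolding c_def .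
  have ratio: "(\<lambda>n. a (Suc n) / a n) \<longlonglongrightarrow> r"
  proof -
    have l1: "(\<lambda>n. a (Suc n) / r^(Suc n)) \<longlonglongrightarrow> c" using limc by (rule LIMSEQ_Suc)
    have t: "(\<lambda>n. r * ((a (Suc n) / r^(Suc n)) / (a n / r^n))) \<longlonglongrightarrow> r * (c / c)"
      using cpos by (intro tendsto_mult tendsto_const tendsto_divide l1 limc) simp
    have pw: "r * ((a (Suc n) / r^(Suc n)) / (a n / r^n)) = a (Suc n) / a n" for n
      using rpos by (simp add: field_simps)
    have eq: "(\<lambda>n. r * ((a (Suc n) / r^(Suc n)) / (a n / r^n))) = (\<lambda>n. a (Suc n) / a n)"
      by (rule ext) (rule pw)
    have "(\<lambda>n. a (Suc n) / a n) \<longlonglongrightarrow> r * (c / c)" using t unfolding eq .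
    then show ?thesis using cpos by simp
  qed
  have equiv: "a \<sim>[at_top] (\<lambda>n. c * r ^ n)"
  proof (rule asymp_equivI')
    have "(\<lambda>n. (a n / r^n) / c) \<longlonglongrightarrow> c / c" by (intro tendsto_divide limc tendsto_const) (use cpos in simp)
    moreover have "(a n / r^n) / c = a n / (c * r^n)" for n by simp
    ultimately show "((\<lambda>n. a n / (c * r^n)) \<longlongrightarrow> 1) at_top" using cpos by (simp add: mult.commute)
  qed
  have r1': "1.9781317474 \<le> r" "r < 1.9781317475" using rr by simp_all
  show ?thesis
    using r1' cl cu ratio equiv unfolding a_def by blast
qed

theorem theorem2:
  shows "Abs_fps (\<lambda>n. real (a_count n)) = - (gf_num / gf_den)
    \<and> map a_count [0..<31] =
      [1, 1, 2, 4, 8, 16, 32, 64, 128, 255, 505, 998, 1971, 3893, 7697, 15223, 30113,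
       59575, 117861, 233164, 461250, 912423, 1804882, 3570257, 7062369, 13970211,
       27634848, 54665348, 108135332, 213906125, 423134791]
    \<and> (\<exists>r c :: real.
         1.9781317474 \<le> r \<and> r < 1.9781317475
       \<and> 0.54805291269 \<le> c \<and> c < 0.54805291270
       \<and> (\<lambda>n. real (a_count (Suc n)) / real (a_count n)) \<longlonglongrightarrow> r
       \<and> (\<lambda>n. real (a_count n)) \<sim>[at_top] (\<lambda>n. c * r ^ n))"
proof -
  have 1: "Abs_fps (\<lambda>n. real (a_count n)) = - (gf_num / gf_den)" using A_eq unfolding A_def .
  show ?thesis using 1 vals main_asym by blast
qed

end
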